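(* Let $0<s<\tfrac12$ and set $$\gamma(s)=\gamma_1(s)\gamma_2(s),\qquad \gamma_1(s)=\frac{1}{2}\left(\frac{2^{1-2s}-1}{1-2^{-2s}}\right),\qquad \gamma_2(s)=\frac{2-2^{-2s}}{1-2^{-2s}}.$$ Then for every $\varphi\in\mathcal{S}(\mathcal{H})$, $$\mathcal{Q}^\delta_s(\varphi)\cdot\mathcal{E}^\delta_s(\varphi)\geq\gamma(s)\,\|\varphi\|_{L^2(\mathbb{R}^+)}^4 .$$
   Context: Let $\mathbb{R}^+=(0,\infty)$. Dyadic intervals. $\mathcal{D}$ is the family of dyadic intervals in $\mathbb{R}^+$, namely the intervals $I^j_k=(k2^{-j},(k+1)2^{-j}]$ with $j\in\mathbb{Z}$ and $k$ a nonnegative integer. Dyadic distance. For $x,y\in\mathbb{R}^+$ set $\delta(x,y)=\inf\{|I|: I\in\mathcal{D},\ x,y\in I\}$. This is a metric on $\mathbb{R}^+$. Haar system. Let $h=\chi_{(0,1/2]}-\chi_{(1/2,1]}$. The Haar system $\mathcal{H}$ consists of the functions $h_I(x)=2^{j/2}h(2^jx-k)$, one for each $I=I^j_k\in\mathcal{D}$. For $h=h_I$ write $I(h)=I$. The system $\mathcal{H}$ is an orthonormal basis of $L^2(\mathbb{R}^+)$. $\mathcal{S}(\mathcal{H})$ denotes the set of finite linear combinations (complex coefficients) of elements of $\mathcal{H}$. Quadratic forms, for functions on $\mathbb{R}^+$: $$\mathcal{E}^\delta_s(\varphi)=\iint_{(\mathbb{R}^+)^2}\frac{|\varphi(x)-\varphi(y)|^2}{\delta(x,y)^{2s}}\,\frac{dx\,dy}{\delta(x,y)},$$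 $$\mathcal{Q}^\delta_s(\varphi)=\iint_{(\mathbb{R}^+)^2}\delta(x,y)^{2s}\varphi(x)\overline{\varphi(y)}\,\frac{dx\,dy}{\delta(x,y)}.$$ *)

theory Defs
  imports "HOL-Analysis.Analysis" "HOL-Library.Complex_Order"
begin

definition dyadic_interval :: "int \<Rightarrow> nat \<Rightarrow> real set" where
  "dyadic_interval j k = {real k * 2 powr (- real_of_int j) <.. (real k + 1) * 2 powr (- real_of_int j)}"

definition dyadic_family :: "real set set" where
  "dyadic_family = {dyadic_interval j k | j k. True}"

definition dyadic_dist :: "real \<Rightarrow> real \<Rightarrow> real" where
  "dyadic_dist x y = Inf {measure lborel I | I. I \<in> dyadic_family \<and> x \<in> I \<and> y \<in> I}"

definition haar_mother :: "real \<Rightarrow> real" where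
  "haar_mother x = indicator {0<..1/2} x - indicator {1/2<..1} x"

definition haar :: "int \<Rightarrow> nat \<Rightarrow> real \<Rightarrow> real" where
  "haar j k x = 2 powr (real_of_int j / 2) * haar_mother (2 powr (real_of_int j) * x - real k)"

definition haar_span :: "(real \<Rightarrow> complex) set" where
  "haar_span = {\<phi>. \<exists>F c. finite (F :: (int \<times> nat) set) \<and>
       \<phi> = (\<lambda>x. \<Sum>(j,k)\<in>F. c (j,k) * complex_of_real (haar j k x))}"

definition posquad :: "(real \<times> real) set" where
  "posquad = {0<..} \<times> {0<..}"

definition energy_E :: "real \<Rightarrow> (real \<Rightarrow> complex) \<Rightarrow> real" where
  "energy_E s \<phi> = (LINT p : posquad | (lborel \<Otimes>\<^sub>M lborel).
      (cmod (\<phi> (fst p) - \<phi> (snd p)))\<^sup>2 / dyadic_dist (fst p) (snd p) powr (2 * s)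
        / dyadic_dist (fst p) (snd p))"

definition form_Q :: "real \<Rightarrow> (real \<Rightarrow> complex) \<Rightarrow> complex" where
  "form_Q s \<phi> = (LINT p : posquad | (lborel \<Otimes>\<^sub>M lborel).
      complex_of_real (dyadic_dist (fst p) (snd p) powr (2 * s)) * \<phi> (fst p) * cnj (\<phi> (snd p))
        / complex_of_real (dyadic_dist (fst p) (snd p)))"

definition L2_norm_pos :: "(real \<Rightarrow> complex) \<Rightarrow> real" where
  "L2_norm_pos \<phi> = sqrt (LINT x : {0<..} | lborel. (cmod (\<phi> x))\<^sup>2)"

definition dgamma1 :: "real \<Rightarrow> real" where
  "dgamma1 s = (1/2) * ((2 powr (1 - 2 * s) - 1) / (1 - 2 powr (- (2 * s))))"

definition dgamma2 :: "real \<Rightarrow> real" where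
  "dgamma2 s = (2 - 2 powr (- (2 * s))) / (1 - 2 powr (- (2 * s)))"

definition dgamma :: "real \<Rightarrow> real" where
  "dgamma s = dgamma1 s * dgamma2 s"

end

theory Submission
  imports Defs
begin

definition cell :: "int \<Rightarrow> real \<Rightarrow> int" where
  "cell m x = \<lceil>x / 2 powr (real_of_int m)\<rceil>"

definition eqv :: "int \<Rightarrow> real \<Rightarrow> real \<Rightarrow> bool" where
  "eqv m x y \<longleftrightarrow> cell m x = cell m y"

definition C :: "int \<Rightarrow> nat \<Rightarrow> real set" where
  "C m k = {real k * 2 powr (real_of_int m) <.. (real k + 1) * 2 powr (real_of_int m)}"

lemma mem_C_iff: "x \<in> C m k \<longleftrightarrow> cell m x = int k + 1"
proof -
  have p: "2 powr (real_of_int m) > 0" by simp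
  have "x \<in> C m k \<longleftrightarrow> real k < x / 2 powr m \<and> x / 2 powr m \<le> real k + 1"
    unfolding C_def using p by (simp add: field_simps)
  also have "\<dots> \<longleftrightarrow> cell m x = int k + 1"
    unfolding cell_def by (subst ceiling_eq_iff) auto
  finally show ?thesis .
qed

lemma ceiling_half_ceiling: "\<lceil>real_of_int \<lceil>t::real\<rceil> / 2\<rceil> = \<lceil>t / 2\<rceil>"
proof -
  define c where "c = \<lceil>t / 2\<rceil>"
  have c1: "real_of_int c - 1 < t / 2" and c2: "t / 2 \<le> real_of_int c"
    using c_def by linarith+
  have "\<lceil>t\<rceil> \<le> 2 * c" using c2 by (simp add: ceiling_le_iff)
  moreover have "\<lceil>t\<rceil> > 2 * c - 2" using c1 by linarith
  ultimately have "real_of_int c - 1 < real_of_int \<lceil>t\<rceil> / 2 \<and> real_of_int \<lceil>t\<rceil> / 2 \<le> real_of_int c"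
    by linarith
  then show ?thesis unfolding c_def[symmetric] by (subst ceiling_eq_iff) auto
qed

lemma cell_succ: "cell (m + 1) x = \<lceil>real_of_int (cell m x) / 2\<rceil>"
proof -
  have e: "2 powr real_of_int (m + 1) = 2 powr real_of_int m * 2"
    by (simp add: powr_add)
  have h: "x / 2 powr real_of_int (m + 1) = (x / 2 powr real_of_int m) / 2"
    unfolding e by (simp add: divide_divide_eq_left)
  show ?thesis unfolding cell_def by (subst h) (rule ceiling_half_ceiling[symmetric])
qed

lemma eqv_succ: "eqv m x y \<Longrightarrow> eqv (m + 1) x y"
  unfolding eqv_def by (simp add: cell_succ)

lemma eqv_mono: assumes "eqv m x y" "m \<le> m'" shows "eqv m' x y"
  using assms(2) by (induction rule: int_ge_induct) (auto intro: eqv_succ simp: assms(1))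

lemma int_threshold:
  fixes P :: "int \<Rightarrow> bool"
  assumes up: "\<And>m. P m \<Longrightarrow> P (m + 1)" and ex: "P mst" and bd: "\<And>m. P m \<Longrightarrow> b \<le> m"
  shows "\<exists>L. \<forall>m. P m \<longleftrightarrow> L \<le> m"
proof -
  have upm: "P m'" if "P m" "m \<le> m'" for m m'
    using that(2) by (induction rule: int_ge_induct) (auto intro: up simp: that(1))
  have "P (b + int (nat (mst - b)))" using ex bd[OF ex] by simp
  define n0 where "n0 = (LEAST n. P (b + int n))"
  have Pn0: "P (b + int n0)" unfolding n0_def
    by (rule LeastI[where k = "nat (mst - b)"]) fact
  show ?thesis
  proof (intro exI allI iffI)
    fix m assume "P m"
    then have "b \<le> m" by (rule bd)
    then have "n0 \<le> nat (m - b)" unfolding n0_def using \<open>P m\<close> by (intro Least_le) simp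
    then show "b + int n0 \<le> m" using \<open>b \<le> m\<close> by linarith
  next
    fix m assume "b + int n0 \<le> m" then show "P m" using upm[OF Pn0] by blast
  qed
qed

lemma powr2_int_pos: "(2::real) powr (real_of_int m) > 0" by simp

lemma cell_one: assumes "0 < x" "x \<le> 2 powr real_of_int m" shows "cell m x = 1"
proof -
  have "0 < x / 2 powr real_of_int m" "x / 2 powr real_of_int m \<le> 1"
    using assms by (auto simp: field_simps)
  then show ?thesis unfolding cell_def by (subst ceiling_eq_iff) auto
qed

lemma eqv_large: "0 < x \<Longrightarrow> 0 < y \<Longrightarrow> x \<le> 2 powr real_of_int m \<Longrightarrow> y \<le> 2 powr real_of_int m
   \<Longrightarrow> eqv m x y"
  unfolding eqv_def using cell_one by simp

lemma eqv_close: assumes "eqv m x y" shows "\<bar>x - y\<bar> < 2 powr real_of_int m"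
proof -
  define t where "t = 2 powr real_of_int m"
  have t: "t > 0" unfolding t_def by simp
  have "\<lceil>x / t\<rceil> = \<lceil>y / t\<rceil>" using assms unfolding eqv_def cell_def t_def .
  then have "\<bar>x / t - y / t\<bar> < 1"
    by (metis abs_diff_less_iff add.commute ceiling_correct ceiling_less_cancel
        ceiling_less_iff diff_less_eq less_ceiling_iff)
  then have "\<bar>x - y\<bar> / t < 1" using t by (simp add: diff_divide_distrib[symmetric])
  then show ?thesis using t unfolding t_def[symmetric] by (simp add: field_simps)
qed

lemma exists_large_level: "\<exists>m::int. (r::real) \<le> 2 powr real_of_int m"
proof -
  obtain n :: nat where "r < real n" using reals_Archimedean2 by blast
  moreover have "real n \<le> 2 powr real_of_int (int n)"
  proof -
    have "real n < 2 ^ n" by (rule of_nat_less_two_power)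
    also have "(2::real) ^ n = 2 powr real n" by (simp add: powr_realpow)
    finally show ?thesis by simp
  qed
  ultimately show ?thesis by (intro exI[of _ "int n"]) simp
qed

lemma exists_small_level: assumes "(r::real) > 0" shows "\<exists>m::int. 2 powr real_of_int m < r"
proof -
  obtain m where "1 / r \<le> 2 powr real_of_int m" using exists_large_level by blast
  moreover have "2 powr real_of_int (m + 1) = 2 powr real_of_int m * 2" by (simp add: powr_add)
  ultimately have "1 / r < 2 powr real_of_int (m + 1)" using powr2_int_pos[of m] by linarith
  then have "1 < r * 2 powr real_of_int (m + 1)" using assms
    by (simp add: divide_less_eq mult.commute)
  then have "1 / 2 powr real_of_int (m + 1) < r"
    by (simp add: divide_less_eq mult.commute)
  moreover have "2 powr (- real_of_int (m + 1)) = 1 / 2 powr real_of_int (m + 1)"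
    by (rule powr_minus_divide)
  ultimately have "2 powr (- real_of_int (m + 1)) < r" by simp
  then show ?thesis by (intro exI[of _ "- (m + 1)"]) simp
qed

lemma dist_set: assumes "0 < x" "0 < y"
  shows "{measure lborel I | I. I \<in> dyadic_family \<and> x \<in> I \<and> y \<in> I} = {2 powr real_of_int m | m. eqv m x y}"
proof (intro equalityI subsetI)
  fix r assume "r \<in> {measure lborel I | I. I \<in> dyadic_family \<and> x \<in> I \<and> y \<in> I}"
  then obtain j k where I: "r = measure lborel (dyadic_interval j k)" "x \<in> dyadic_interval j k" "y \<in> dyadic_interval j k"
    unfolding dyadic_family_def by auto
  have D: "dyadic_interval j k = C (- j) k" unfolding dyadic_interval_def C_def by simp
  have "cell (-j) x = int k + 1" "cell (-j) y = int k + 1" using I D mem_C_iff by auto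
  then have "eqv (-j) x y" unfolding eqv_def by simp
  moreover have "r = 2 powr real_of_int (-j)"
    unfolding I D C_def by (simp add: measure_def algebra_simps)
  ultimately show "r \<in> {2 powr real_of_int m | m. eqv m x y}" by blast
next
  fix r assume "r \<in> {2 powr real_of_int m | m. eqv m x y}"
  then obtain m where m: "r = 2 powr real_of_int m" "eqv m x y" by blast
  have "cell m x \<ge> 1" unfolding cell_def using assms by (simp add: less_ceiling_iff[symmetric])
  define k where "k = nat (cell m x - 1)"
  have kx: "cell m x = int k + 1" using \<open>cell m x \<ge> 1\<close> unfolding k_def by simp
  then have "x \<in> C m k" "y \<in> C m k" using m(2) mem_C_iff unfolding eqv_def by auto
  moreover have D: "dyadic_interval (-m) k = C m k" unfolding dyadic_interval_def C_def by simp
  moreover have "r = measure lborel (C m k)"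
    unfolding m C_def by (simp add: measure_def algebra_simps)
  ultimately show "r \<in> {measure lborel I | I. I \<in> dyadic_family \<and> x \<in> I \<and> y \<in> I}"
    unfolding dyadic_family_def by (metis (mono_tags, lifting) mem_Collect_eq)
qed

lemma dist_level: assumes "0 < x" "0 < y" "x \<noteq> y"
  obtains L where "\<And>m. eqv m x y \<longleftrightarrow> L \<le> m" "dyadic_dist x y = 2 powr real_of_int L"
proof -
  obtain m0 where m0: "max x y \<le> 2 powr real_of_int m0" using exists_large_level by blast
  obtain b where b: "2 powr real_of_int b < \<bar>x - y\<bar>" using exists_small_level assms by force
  have "\<exists>L. \<forall>m. eqv m x y \<longleftrightarrow> L \<le> m"
  proof (rule int_threshold[where mst = m0 and b = b])
    show "eqv m0 x y" using m0 assms by (intro eqv_large) auto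
  next
    fix m assume "eqv m x y"
    then have "\<bar>x - y\<bar> < 2 powr real_of_int m" by (rule eqv_close)
    then have "2 powr real_of_int b < 2 powr real_of_int m" using b by linarith
    then show "b \<le> m" by simp
  qed (rule eqv_succ)
  then obtain L where L: "\<And>m. eqv m x y \<longleftrightarrow> L \<le> m" by blast
  have "dyadic_dist x y = Inf {2 powr real_of_int m | m. eqv m x y}"
    unfolding dyadic_dist_def dist_set[OF assms(1,2)] ..
  also have "\<dots> = 2 powr real_of_int L"
  proof (rule cInf_eq_minimum)
    show "2 powr real_of_int L \<in> {2 powr real_of_int m | m. eqv m x y}" using L by blast
  next
    fix r assume "r \<in> {2 powr real_of_int m | m. eqv m x y}"
    then show "2 powr real_of_int L \<le> r" using L by auto
  qed
  finally show ?thesis using L that by blast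
qed

lemma dist_diag: assumes "0 < x" shows "dyadic_dist x x = 0"
proof -
  have S: "{measure lborel I | I. I \<in> dyadic_family \<and> x \<in> I \<and> x \<in> I} = {2 powr real_of_int m | m::int. True}"
    unfolding dist_set[OF assms assms] eqv_def by simp
  have ne: "{2 powr real_of_int m | m::int. True} \<noteq> {}" by blast
  have bdd: "bdd_below {2 powr real_of_int m | m::int. True}"
    by (rule bdd_belowI[of _ 0]) auto
  have ge: "0 \<le> Inf {2 powr real_of_int m | m::int. True}"
    by (rule cInf_greatest[OF ne]) auto
  have "\<not> Inf {2 powr real_of_int m | m::int. True} > 0"
  proof
    assume "Inf {2 powr real_of_int m | m::int. True} > 0"
    then obtain m where "2 powr real_of_int m < Inf {2 powr real_of_int m | m::int. True}"
      using exists_small_level by blast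
    moreover have "Inf {2 powr real_of_int m | m::int. True} \<le> 2 powr real_of_int m"
      by (rule cInf_lower[OF _ bdd]) blast
    ultimately show False by linarith
  qed
  then show ?thesis unfolding dyadic_dist_def S using ge by linarith
qed

definition wt :: "real \<Rightarrow> int \<Rightarrow> real" where
  "wt p m = (1 - 2 powr p) * 2 powr (p * real_of_int m)"

definition ind :: "bool \<Rightarrow> real" where "ind b = (if b then 1 else 0)"

definition kterm :: "real \<Rightarrow> int \<Rightarrow> real \<Rightarrow> real \<Rightarrow> nat \<Rightarrow> real" where
  "kterm p c x y n = wt p (c + int n) * ind (eqv (c + int n) x y)
                   + wt p (c - int n - 1) * ind (eqv (c - int n - 1) x y)"

lemma kernel_sums:
  assumes "0 < x" "0 < y" "x \<noteq> y" "p < 0"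
  shows "(\<lambda>n. kterm p c x y n) sums (dyadic_dist x y powr p)"
proof -
  obtain L where L: "\<And>m. eqv m x y \<longleftrightarrow> L \<le> m" and D: "dyadic_dist x y = 2 powr real_of_int L"
    using dist_level[OF assms(1-3)] by blast
  define f where "f m = 2 powr (p * real_of_int (max m L))" for m
  have tel: "wt p m * ind (eqv m x y) = f m - f (m + 1)" for m
  proof (cases "L \<le> m")
    case True
    then have "f (m + 1) = 2 powr (p * real_of_int m) * 2 powr p" "f m = 2 powr (p * real_of_int m)"
      unfolding f_def by (simp_all add: max_def powr_add[symmetric] algebra_simps)
    then show ?thesis using True L unfolding wt_def ind_def by (simp add: algebra_simps)
  next
    case False
    then show ?thesis using L unfolding wt_def ind_def f_def by (simp add: max_def)
  qed
  have ps: "(\<Sum>i<n. kterm p c x y i) = f (c - int n) - f (c + int n)" for n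
    by (induction n) (simp_all add: kterm_def tel algebra_simps)
  have ev: "eventually (\<lambda>n. (\<Sum>i<n. kterm p c x y i) = 2 powr (p * real_of_int L) - 2 powr (p * real_of_int c) * (2 powr p) ^ n) sequentially"
  proof (rule eventually_sequentiallyI[where c = "nat \<bar>c - L\<bar>"])
    fix n assume n: "nat \<bar>c - L\<bar> \<le> n"
    have h1: "c - int n \<le> L" "L \<le> c + int n" using n by auto
    have "f (c - int n) = 2 powr (p * real_of_int L)" unfolding f_def using h1 by (simp add: max_def)
    moreover have "f (c + int n) = 2 powr (p * real_of_int c) * (2 powr p) ^ n"
      unfolding f_def using h1 by (simp add: max_def powr_realpow[symmetric] powr_powr powr_add[symmetric] algebra_simps)
    ultimately show "(\<Sum>i<n. kterm p c x y i) = 2 powr (p * real_of_int L) - 2 powr (p * real_of_int c) * (2 powr p) ^ n"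
      using ps by simp
  qed
  have "(\<lambda>n. 2 powr (p * real_of_int L) - 2 powr (p * real_of_int c) * (2 powr p) ^ n) \<longlonglongrightarrow> 2 powr (p * real_of_int L) - 2 powr (p * real_of_int c) * 0"
    using assms(4) by (intro tendsto_intros LIMSEQ_power_zero) (auto simp: powr_less_one)
  then have "(\<lambda>n. \<Sum>i<n. kterm p c x y i) \<longlonglongrightarrow> 2 powr (p * real_of_int L)"
    using ev by (simp add: tendsto_cong)
  moreover have "dyadic_dist x y powr p = 2 powr (p * real_of_int L)"
    unfolding D by (simp add: powr_powr mult.commute)
  ultimately show ?thesis unfolding sums_def by simp
qed

lemma prod_integrable:
  fixes f g :: "real \<Rightarrow> complex"
  assumes f: "integrable lborel f" and g: "integrable lborel g"
  shows "integrable (lborel \<Otimes>\<^sub>M lborel) (\<lambda>p. f (fst p) * g (snd p))"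
proof (rule lborel_pair.Fubini_integrable)
  have [measurable]: "f \<in> borel_measurable lborel" "g \<in> borel_measurable lborel"
    using f g by (auto dest: borel_measurable_integrable)
  show "(\<lambda>p. f (fst p) * g (snd p)) \<in> borel_measurable (lborel \<Otimes>\<^sub>M lborel)" by measurable
  have "integrable lborel (\<lambda>x. norm (f x) * (\<integral>y. norm (g y) \<partial>lborel))"
    using f by (intro integrable_mult_left integrable_norm)
  then show "integrable lborel (\<lambda>x. \<integral>y. norm (f (fst (x, y)) * g (snd (x, y))) \<partial>lborel)"
    by (simp add: norm_mult)
  show "AE x in lborel. integrable lborel (\<lambda>y. f (fst (x, y)) * g (snd (x, y)))"
    using g by (auto intro!: integrable_mult_right)
qed

lemma prod_integral:
  fixes f g :: "real \<Rightarrow> complex"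
  assumes f: "integrable lborel f" and g: "integrable lborel g"
  shows "integral\<^sup>L (lborel \<Otimes>\<^sub>M lborel) (\<lambda>p. f (fst p) * g (snd p)) = integral\<^sup>L lborel f * integral\<^sup>L lborel g"
proof -
  have "integral\<^sup>L (lborel \<Otimes>\<^sub>M lborel) (\<lambda>p. f (fst p) * g (snd p)) =
        (\<integral>x. (\<integral>y. f (fst (x,y)) * g (snd (x,y)) \<partial>lborel) \<partial>lborel)"
    using prod_integrable[OF f g] by (rule lborel_pair.integral_fst'[symmetric])
  also have "\<dots> = (\<integral>x. f x * integral\<^sup>L lborel g \<partial>lborel)" by simp
  also have "\<dots> = integral\<^sup>L lborel f * integral\<^sup>L lborel g" by simp
  finally show ?thesis .
qed

lemma AE_offdiag: "AE p in lborel \<Otimes>\<^sub>M lborel. fst p \<noteq> snd p"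
proof (rule lborel_pair.AE_pair_measure)
  show "{x \<in> space (lborel \<Otimes>\<^sub>M lborel). fst x \<noteq> snd x} \<in> sets (lborel \<Otimes>\<^sub>M lborel)"
    by measurable
  show "AE x in lborel. AE y in lborel. fst (x, y) \<noteq> snd (x, y)"
    using AE_lborel_singleton by (auto simp: eq_commute)
qed

lemma cell_measurable[measurable]: "cell m \<in> borel \<rightarrow>\<^sub>M count_space UNIV"
  unfolding cell_def by measurable

lemma C_sets[measurable]: "C m k \<in> sets lborel"
  unfolding C_def by simp

lemma posquad_sets[measurable]: "posquad \<in> sets (lborel \<Otimes>\<^sub>M lborel)"
  unfolding posquad_def by (intro pair_measureI) auto

definition Eq :: "int \<Rightarrow> (real \<times> real) set" where
  "Eq m = {p \<in> posquad. eqv m (fst p) (snd p)}"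

lemma Eq_sets[measurable]: "Eq m \<in> sets (lborel \<Otimes>\<^sub>M lborel)"
proof -
  have "Eq m = posquad \<inter> {p \<in> space (lborel \<Otimes>\<^sub>M lborel). cell m (fst p) = cell m (snd p)}"
    unfolding Eq_def eqv_def by (auto simp: space_pair_measure)
  also have "\<dots> \<in> sets (lborel \<Otimes>\<^sub>M lborel)" by measurable
  finally show ?thesis .
qed

lemma emeasure_C: "emeasure lborel (C m k) = ennreal (2 powr real_of_int m)"
  unfolding C_def by (simp add: algebra_simps)

lemma measure_C: "measure lborel (C m k) = 2 powr real_of_int m"
  unfolding measure_def emeasure_C by simp

lemma cell_pos: "0 < x \<Longrightarrow> 1 \<le> cell m x"
  unfolding cell_def by (simp add: less_ceiling_iff[symmetric])

lemma C_pos: "x \<in> C m k \<Longrightarrow> 0 < x"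
  using mem_C_iff[of x m k] cell_def
  by (metis C_def greaterThanAtMost_iff le_less_trans mult_nonneg_nonneg of_nat_0_le_iff powr_ge_zero)

lemma indicator_C_eq: "0 < x \<Longrightarrow> indicator (C m k) x = (if k = nat (cell m x - 1) then 1 else 0)"
  using mem_C_iff[of x m k] cell_pos[of x m] by (auto simp: indicator_def)

definition kb :: "real \<Rightarrow> int \<Rightarrow> nat" where
  "kb R m = nat \<lceil>R / 2 powr real_of_int m\<rceil>"

lemma C_beyond: assumes "0 < R" "kb R m \<le> k" "x \<in> C m k" shows "R < x"
proof -
  have "R / 2 powr real_of_int m \<le> real (kb R m)" unfolding kb_def by linarith
  then have "R \<le> real (kb R m) * 2 powr real_of_int m" by (simp add: field_simps)
  also have "\<dots> \<le> real k * 2 powr real_of_int m" using assms(2) by (intro mult_right_mono) auto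
  also have "\<dots> < x" using assms(3) unfolding C_def by simp
  finally show ?thesis .
qed

lemma cell_below_kb: assumes "0 < x" "x \<le> R" shows "nat (cell m x - 1) < kb R m"
proof -
  have "x / 2 powr real_of_int m \<le> R / 2 powr real_of_int m" using assms by (simp add: divide_right_mono)
  then have "cell m x \<le> \<lceil>R / 2 powr real_of_int m\<rceil>" unfolding cell_def by (rule ceiling_mono)
  then show ?thesis using cell_pos[OF assms(1), of m] unfolding kb_def by linarith
qed

lemma sum_C_1d:
  fixes G :: "real \<Rightarrow> 'a::{comm_ring_1}"
  assumes "0 < R" "\<And>x. R < x \<Longrightarrow> G x = 0"
  shows "indicator {0<..} x * G x = (\<Sum>k<kb R m. indicator (C m k) x * G x)"
proof (cases "0 < x")
  case True
  have "(\<Sum>k<kb R m. indicator (C m k) x * G x) = (\<Sum>k<kb R m. (if k = nat (cell m x - 1) then G x else 0))"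
    using True by (intro sum.cong) (auto simp: indicator_C_eq)
  also have "\<dots> = (if nat (cell m x - 1) < kb R m then G x else 0)"
    by simp
  also have "\<dots> = indicator {0<..} x * G x"
    using True assms cell_below_kb[OF True, of R m] by (cases "x \<le> R") auto
  finally show ?thesis ..
next
  case False
  then have "\<And>k. x \<notin> C m k" using C_pos by blast
  then show ?thesis using False by (simp add: indicator_def)
qed

lemma sum_C_2d:
  fixes G :: "real \<times> real \<Rightarrow> 'a::{comm_ring_1}"
  assumes "0 < R" "\<And>x y. R < x \<Longrightarrow> R < y \<Longrightarrow> G (x, y) = 0"
  shows "indicator (Eq m) p * G p = (\<Sum>k<kb R m. indicator (C m k \<times> C m k) p * G p)"
proof -
  obtain x y where p: "p = (x, y)" by (cases p)
  show ?thesis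
  proof (cases "p \<in> Eq m")
    case True
    then have xy: "0 < x" "0 < y" "cell m x = cell m y" unfolding p Eq_def posquad_def eqv_def by auto
    define k0 where "k0 = nat (cell m x - 1)"
    have ind: "indicator (C m k \<times> C m k) p * G p = (if k = k0 then G p else (0::'a))" for k
      unfolding p k0_def using xy by (simp add: indicator_times indicator_C_eq)
    have "(\<Sum>k<kb R m. indicator (C m k \<times> C m k) p * G p) = (if k0 < kb R m then G p else 0)"
      unfolding ind by simp
    also have "\<dots> = indicator (Eq m) p * G p"
    proof (cases "k0 < kb R m")
      case False
      have "x \<in> C m k0" "y \<in> C m k0" unfolding k0_def using xy cell_pos[of x m] mem_C_iff by auto
      have "R < x" using C_beyond[OF assms(1) _ \<open>x \<in> C m k0\<close>] False by simp
      have "R < y" using C_beyond[OF assms(1) _ \<open>y \<in> C m k0\<close>] False by simp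
      then show ?thesis using assms(2) \<open>R < x\<close> \<open>R < y\<close> p True by auto
    qed (use True in auto)
    finally show ?thesis ..
  next
    case False
    have "indicator (C m k \<times> C m k) p = (0::'a)" for k
    proof (rule ccontr)
      assume "indicator (C m k \<times> C m k) p \<noteq> (0::'a)"
      then have "x \<in> C m k" "y \<in> C m k" unfolding p by (auto simp: indicator_def split: if_splits)
      then have "p \<in> Eq m" unfolding p Eq_def posquad_def eqv_def using mem_C_iff C_pos by auto
      then show False using False by simp
    qed
    then show ?thesis using False by simp
  qed
qed

lemma C_sets_borel[measurable]: "C m k \<in> sets borel"
  unfolding C_def by simp

lemma integrable_C:
  fixes f :: "real \<Rightarrow> complex"
  assumes [measurable]: "f \<in> borel_measurable lborel" and b: "\<And>x. norm (f x) \<le> Bf"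
  shows "integrable lborel (\<lambda>x. indicator (C m k) x * f x)"
proof (rule integrableI_bounded_set[where A = "C m k" and B = Bf])
  show "emeasure lborel (C m k) < \<infinity>" unfolding emeasure_C by simp
qed (auto simp: b indicator_def)

lemma integral_C_bound:
  fixes f :: "real \<Rightarrow> complex"
  assumes [measurable]: "f \<in> borel_measurable lborel" and b: "\<And>x. norm (f x) \<le> Bf"
  shows "norm (integral\<^sup>L lborel (\<lambda>x. indicator (C m k) x * f x)) \<le> Bf * 2 powr real_of_int m"
proof -
  have "norm (integral\<^sup>L lborel (\<lambda>x. indicator (C m k) x * f x)) \<le> integral\<^sup>L lborel (\<lambda>x. norm (indicator (C m k) x * f x))"
    by (rule integral_norm_bound)
  also have "\<dots> \<le> integral\<^sup>L lborel (\<lambda>x. indicator (C m k) x * Bf)"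
  proof (rule integral_mono)
    show "integrable lborel (\<lambda>x. norm (indicator (C m k) x * f x))"
      using integrable_C[OF assms] by (rule integrable_norm)
    show "integrable lborel (\<lambda>x. indicator (C m k) x * Bf)"
      using emeasure_C[of m k] by (intro integrable_mult_left integrable_real_indicator) auto
  qed (auto simp: indicator_def norm_mult b)
  also have "\<dots> = Bf * 2 powr real_of_int m" using measure_C[of m k] by simp
  finally show ?thesis .
qed

lemma cell_prod:
  fixes f g :: "real \<Rightarrow> complex"
  assumes [measurable]: "f \<in> borel_measurable lborel" "g \<in> borel_measurable lborel"
    and b: "\<And>x. norm (f x) \<le> Bf" "\<And>x. norm (g x) \<le> Bg"
  shows "integrable (lborel \<Otimes>\<^sub>M lborel) (\<lambda>p. indicator (C m k \<times> C m k) p * (f (fst p) * g (snd p)))"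
    and "integral\<^sup>L (lborel \<Otimes>\<^sub>M lborel) (\<lambda>p. indicator (C m k \<times> C m k) p * (f (fst p) * g (snd p))) =
         integral\<^sup>L lborel (\<lambda>x. indicator (C m k) x * f x) * integral\<^sup>L lborel (\<lambda>x. indicator (C m k) x * g x)"
proof -
  have e: "(\<lambda>p. indicator (C m k \<times> C m k) p * (f (fst p) * g (snd p))) =
        (\<lambda>p. (indicator (C m k) (fst p) * f (fst p)) * (indicator (C m k) (snd p) * g (snd p)))"
    by (auto simp: indicator_def)
  show "integrable (lborel \<Otimes>\<^sub>M lborel) (\<lambda>p. indicator (C m k \<times> C m k) p * (f (fst p) * g (snd p)))"
    unfolding e by (rule prod_integrable[OF integrable_C[OF assms(1) b(1)] integrable_C[OF assms(2) b(2)]])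
  show "integral\<^sup>L (lborel \<Otimes>\<^sub>M lborel) (\<lambda>p. indicator (C m k \<times> C m k) p * (f (fst p) * g (snd p))) =
         integral\<^sup>L lborel (\<lambda>x. indicator (C m k) x * f x) * integral\<^sup>L lborel (\<lambda>x. indicator (C m k) x * g x)"
    unfolding e by (rule prod_integral[OF integrable_C[OF assms(1) b(1)] integrable_C[OF assms(2) b(2)]])
qed

lemma level_prod:
  fixes f g :: "real \<Rightarrow> complex"
  assumes [measurable]: "f \<in> borel_measurable lborel" "g \<in> borel_measurable lborel"
    and b: "\<And>x. norm (f x) \<le> Bf" "\<And>x. norm (g x) \<le> Bg"
    and R: "0 < R" and z: "\<And>x y. R < x \<Longrightarrow> R < y \<Longrightarrow> f x * g y = 0"
  shows "integrable (lborel \<Otimes>\<^sub>M lborel) (\<lambda>p. indicator (Eq m) p * (f (fst p) * g (snd p)))"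
    and "integral\<^sup>L (lborel \<Otimes>\<^sub>M lborel) (\<lambda>p. indicator (Eq m) p * (f (fst p) * g (snd p))) =
         (\<Sum>k<kb R m. integral\<^sup>L lborel (\<lambda>x. indicator (C m k) x * f x) * integral\<^sup>L lborel (\<lambda>x. indicator (C m k) x * g x))"
proof -
  have e: "(\<lambda>p. indicator (Eq m) p * (f (fst p) * g (snd p))) =
     (\<lambda>p. \<Sum>k<kb R m. indicator (C m k \<times> C m k) p * (f (fst p) * g (snd p)))"
    by (rule ext, rule sum_C_2d[OF R]) (simp add: z)
  show "integrable (lborel \<Otimes>\<^sub>M lborel) (\<lambda>p. indicator (Eq m) p * (f (fst p) * g (snd p)))"
    unfolding e by (rule Bochner_Integration.integrable_sum) (rule cell_prod(1)[OF assms(1,2) b])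
  show "integral\<^sup>L (lborel \<Otimes>\<^sub>M lborel) (\<lambda>p. indicator (Eq m) p * (f (fst p) * g (snd p))) =
         (\<Sum>k<kb R m. integral\<^sup>L lborel (\<lambda>x. indicator (C m k) x * f x) * integral\<^sup>L lborel (\<lambda>x. indicator (C m k) x * g x))"
    unfolding e by (subst Bochner_Integration.integral_sum) (auto intro!: sum.cong cell_prod[OF assms(1,2) b])
qed

lemma wt_nonneg: "p < 0 \<Longrightarrow> 0 \<le> wt p m"
  unfolding wt_def by (intro mult_nonneg_nonneg) (auto simp: powr_less_one less_imp_le)

lemma kterm_nonneg: "p < 0 \<Longrightarrow> 0 \<le> kterm p c x y n"
  unfolding kterm_def ind_def using wt_nonneg by auto

lemma indicator_Eq: "q \<in> posquad \<Longrightarrow> indicator (Eq m) q = ind (eqv m (fst q) (snd q))"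
  unfolding Eq_def ind_def by (auto simp: indicator_def)

lemma Eq_sub: "q \<in> Eq m \<Longrightarrow> q \<in> posquad" unfolding Eq_def by auto

lemma kernel_integral:
  fixes G :: "real \<times> real \<Rightarrow> complex" and p :: real and c :: int and V W :: "int \<Rightarrow> real"
  assumes Gm[measurable]: "G \<in> borel_measurable (lborel \<Otimes>\<^sub>M lborel)"
    and p: "p < 0"
    and intG: "\<And>m. integrable (lborel \<Otimes>\<^sub>M lborel) (\<lambda>q. indicator (Eq m) q * G q)"
    and valG: "\<And>m. integral\<^sup>L (lborel \<Otimes>\<^sub>M lborel) (\<lambda>q. indicator (Eq m) q * G q) = of_real (V m)"
    and intN: "\<And>m. integrable (lborel \<Otimes>\<^sub>M lborel) (\<lambda>q. indicator (Eq m) q * norm (G q))"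
    and bndN: "\<And>m. integral\<^sup>L (lborel \<Otimes>\<^sub>M lborel) (\<lambda>q. indicator (Eq m) q * norm (G q)) \<le> W m"
    and sW: "summable (\<lambda>n. wt p (c + int n) * W (c + int n) + wt p (c - int n - 1) * W (c - int n - 1))"
  defines "H \<equiv> \<lambda>q. indicator posquad q * (if fst q = snd q then 0 else
              complex_of_real (dyadic_dist (fst q) (snd q) powr p) * G q)"
  shows "integrable (lborel \<Otimes>\<^sub>M lborel) H"
    and "summable (\<lambda>n. wt p (c + int n) * V (c + int n) + wt p (c - int n - 1) * V (c - int n - 1))"
    and "integral\<^sup>L (lborel \<Otimes>\<^sub>M lborel) H =
          of_real (\<Sum>n. wt p (c + int n) * V (c + int n) + wt p (c - int n - 1) * V (c - int n - 1))"
proof -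
  define D where "D q = (if fst q \<noteq> snd q then 1 else 0 :: real)" for q :: "real \<times> real"
  have Dm[measurable]: "D \<in> borel_measurable (lborel \<Otimes>\<^sub>M lborel)" unfolding D_def by measurable
  define F where "F n q = complex_of_real (D q * wt p (c + int n) * indicator (Eq (c + int n)) q
      + D q * wt p (c - int n - 1) * indicator (Eq (c - int n - 1)) q) * G q" for n q
  define F0 where "F0 n q = complex_of_real (wt p (c + int n)) * (indicator (Eq (c + int n)) q * G q)
      + complex_of_real (wt p (c - int n - 1)) * (indicator (Eq (c - int n - 1)) q * G q)" for n q
  define NB where "NB n q = wt p (c + int n) * (indicator (Eq (c + int n)) q * norm (G q))
      + wt p (c - int n - 1) * (indicator (Eq (c - int n - 1)) q * norm (G q))" for n q
  have Fm[measurable]: "F n \<in> borel_measurable (lborel \<Otimes>\<^sub>M lborel)" for n unfolding F_def by measurable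
  have F0m[measurable]: "F0 n \<in> borel_measurable (lborel \<Otimes>\<^sub>M lborel)" for n unfolding F0_def by measurable
  have AEF: "AE q in lborel \<Otimes>\<^sub>M lborel. F0 n q = F n q" for n
    using AE_offdiag by eventually_elim (simp add: F_def F0_def D_def indicator_def distrib_right)
  have intF0: "integrable (lborel \<Otimes>\<^sub>M lborel) (F0 n)" for n
    unfolding F0_def by (intro Bochner_Integration.integrable_add integrable_mult_right intG)
  have intF: "integrable (lborel \<Otimes>\<^sub>M lborel) (F n)" for n
    using integrable_cong_AE_imp[OF intF0 Fm AEF] .
  have valF: "integral\<^sup>L (lborel \<Otimes>\<^sub>M lborel) (F n) =
      of_real (wt p (c + int n) * V (c + int n) + wt p (c - int n - 1) * V (c - int n - 1))" for n
  proof -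
    have "integral\<^sup>L (lborel \<Otimes>\<^sub>M lborel) (F n) = integral\<^sup>L (lborel \<Otimes>\<^sub>M lborel) (F0 n)"
      using AEF[of n] by (intro integral_cong_AE) (auto elim: AE_mp)
    also have "\<dots> = of_real (wt p (c + int n) * V (c + int n) + wt p (c - int n - 1) * V (c - int n - 1))"
      unfolding F0_def by (simp add: intG valG)
    finally show ?thesis .
  qed
  have intNB: "integrable (lborel \<Otimes>\<^sub>M lborel) (NB n)" for n
    unfolding NB_def by (intro Bochner_Integration.integrable_add integrable_mult_right intN)
  have normF: "norm (F n q) \<le> NB n q" for n q
  proof -
    define \<alpha> where "\<alpha> = D q * wt p (c + int n) * indicator (Eq (c + int n)) q
      + D q * wt p (c - int n - 1) * indicator (Eq (c - int n - 1)) q"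
    define \<beta> where "\<beta> = wt p (c + int n) * indicator (Eq (c + int n)) q
      + wt p (c - int n - 1) * indicator (Eq (c - int n - 1)) q"
    have a0: "0 \<le> \<alpha>" unfolding \<alpha>_def D_def using wt_nonneg[OF p] by auto
    have ab: "\<alpha> \<le> \<beta>" unfolding \<alpha>_def \<beta>_def D_def using wt_nonneg[OF p] by auto
    have "norm (F n q) = \<alpha> * norm (G q)" unfolding F_def \<alpha>_def[symmetric] using a0 by (simp add: norm_mult)
    also have "\<dots> \<le> \<beta> * norm (G q)" using ab by (intro mult_right_mono) auto
    also have "\<dots> = NB n q" unfolding \<beta>_def NB_def by (simp add: algebra_simps)
    finally show ?thesis .
  qed
  have bF: "integral\<^sup>L (lborel \<Otimes>\<^sub>M lborel) (\<lambda>q. norm (F n q)) \<le>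
       wt p (c + int n) * W (c + int n) + wt p (c - int n - 1) * W (c - int n - 1)" for n
  proof -
    have "integral\<^sup>L (lborel \<Otimes>\<^sub>M lborel) (\<lambda>q. norm (F n q)) \<le> integral\<^sup>L (lborel \<Otimes>\<^sub>M lborel) (NB n)"
      by (intro integral_mono integrable_norm intF intNB normF)
    also have "\<dots> = wt p (c + int n) * integral\<^sup>L (lborel \<Otimes>\<^sub>M lborel) (\<lambda>q. indicator (Eq (c + int n)) q * norm (G q))
        + wt p (c - int n - 1) * integral\<^sup>L (lborel \<Otimes>\<^sub>M lborel) (\<lambda>q. indicator (Eq (c - int n - 1)) q * norm (G q))"
      unfolding NB_def by (simp add: intN)
    also have "\<dots> \<le> wt p (c + int n) * W (c + int n) + wt p (c - int n - 1) * W (c - int n - 1)"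
      using wt_nonneg[OF p] by (intro add_mono mult_left_mono bndN) auto
    finally show ?thesis .
  qed
  have pw: "(\<lambda>n. F n q) sums H q" for q
  proof (cases "q \<in> posquad \<and> fst q \<noteq> snd q")
    case True
    then have q: "0 < fst q" "0 < snd q" "fst q \<noteq> snd q" unfolding posquad_def by (auto simp: mem_Times_iff)
    have "F n q = complex_of_real (kterm p c (fst q) (snd q) n) * G q" for n
      unfolding F_def kterm_def D_def using True by (simp add: indicator_Eq)
    moreover have "(\<lambda>n. complex_of_real (kterm p c (fst q) (snd q) n) * G q) sums
        (complex_of_real (dyadic_dist (fst q) (snd q) powr p) * G q)"
      by (intro sums_mult2 sums_of_real kernel_sums q p)
    ultimately show ?thesis unfolding H_def using True by simp
  next
    case False
    then have "F n q = 0" for n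
      unfolding F_def D_def by (auto simp: indicator_def dest: Eq_sub)
    moreover have "H q = 0" unfolding H_def using False by auto
    ultimately show ?thesis by simp
  qed
  have AEs: "AE q in lborel \<Otimes>\<^sub>M lborel. summable (\<lambda>n. norm (F n q))"
  proof (rule AE_I2)
    fix q
    show "summable (\<lambda>n. norm (F n q))"
    proof (cases "q \<in> posquad \<and> fst q \<noteq> snd q")
      case True
      then have q: "0 < fst q" "0 < snd q" "fst q \<noteq> snd q" unfolding posquad_def by (auto simp: mem_Times_iff)
      have Fk: "F n q = complex_of_real (kterm p c (fst q) (snd q) n) * G q" for n
        unfolding F_def kterm_def D_def using True by (simp add: indicator_Eq)
      have "norm (F n q) = kterm p c (fst q) (snd q) n * norm (G q)" for n
        unfolding Fk using kterm_nonneg[OF p, of c "fst q" "snd q" n] by (simp add: norm_mult)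
      moreover have "summable (\<lambda>n. kterm p c (fst q) (snd q) n * norm (G q))"
        by (intro summable_mult2 sums_summable[OF kernel_sums[OF q p]])
      ultimately show ?thesis by simp
    next
      case False
      then have "F n q = 0" for n
        unfolding F_def D_def by (auto simp: indicator_def dest: Eq_sub)
      then show ?thesis by simp
    qed
  qed
  have sN: "summable (\<lambda>n. integral\<^sup>L (lborel \<Otimes>\<^sub>M lborel) (\<lambda>q. norm (F n q)))"
  proof (rule summable_comparison_test[OF _ sW])
    show "\<exists>N. \<forall>n\<ge>N. norm (integral\<^sup>L (lborel \<Otimes>\<^sub>M lborel) (\<lambda>q. norm (F n q))) \<le>
       wt p (c + int n) * W (c + int n) + wt p (c - int n - 1) * W (c - int n - 1)"
      using bF by (auto intro!: exI[of _ 0] simp: integral_nonneg)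
  qed
  have Heq: "H = (\<lambda>q. \<Sum>n. F n q)" using pw by (auto simp: sums_unique fun_eq_iff)
  show "integrable (lborel \<Otimes>\<^sub>M lborel) H"
    unfolding Heq by (rule integrable_suminf[OF intF AEs sN])
  have "summable (\<lambda>n. integral\<^sup>L (lborel \<Otimes>\<^sub>M lborel) (F n))"
    by (rule summable_integral[OF intF AEs sN])
  then show S: "summable (\<lambda>n. wt p (c + int n) * V (c + int n) + wt p (c - int n - 1) * V (c - int n - 1))"
    unfolding valF by (subst (asm) summable_complex_of_real)
  have "integral\<^sup>L (lborel \<Otimes>\<^sub>M lborel) H = (\<Sum>n. integral\<^sup>L (lborel \<Otimes>\<^sub>M lborel) (F n))"
    unfolding Heq by (rule integral_suminf[OF intF AEs sN])
  also have "\<dots> = (\<Sum>n. complex_of_real (wt p (c + int n) * V (c + int n) + wt p (c - int n - 1) * V (c - int n - 1)))"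
    unfolding valF ..
  also have "\<dots> = of_real (\<Sum>n. wt p (c + int n) * V (c + int n) + wt p (c - int n - 1) * V (c - int n - 1))"
    by (rule suminf_of_real[OF S, symmetric])
  finally show "integral\<^sup>L (lborel \<Otimes>\<^sub>M lborel) H =
          of_real (\<Sum>n. wt p (c + int n) * V (c + int n) + wt p (c - int n - 1) * V (c - int n - 1))" .
qed

lemma integrable_C_real:
  fixes f :: "real \<Rightarrow> real"
  assumes [measurable]: "f \<in> borel_measurable lborel" and b: "\<And>x. \<bar>f x\<bar> \<le> Bf"
  shows "integrable lborel (\<lambda>x. indicator (C m k) x * f x)"
proof (rule integrableI_bounded_set[where A = "C m k" and B = Bf])
  show "emeasure lborel (C m k) < \<infinity>" unfolding emeasure_C by simp
qed (auto simp: b indicator_def)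

lemma integral_C_one: "integral\<^sup>L lborel (\<lambda>x. indicator (C m k) x * (1::complex)) = of_real (2 powr real_of_int m)"
proof -
  have "(\<lambda>x. indicator (C m k) x * (1::complex)) = (\<lambda>x. complex_of_real (indicator (C m k) x))"
    by (auto simp: indicator_def)
  then show ?thesis using measure_C[of m k] emeasure_C[of m k] by simp
qed

lemma sum_sq_le: fixes \<beta> :: "nat \<Rightarrow> real"
  assumes "\<And>k. k \<in> K \<Longrightarrow> 0 \<le> \<beta> k" "\<And>k. k \<in> K \<Longrightarrow> \<beta> k \<le> U"
  shows "(\<Sum>k\<in>K. (\<beta> k)\<^sup>2) \<le> U * (\<Sum>k\<in>K. \<beta> k)"
  unfolding sum_distrib_left power2_eq_square using assms by (intro sum_mono mult_right_mono) auto

locale sf =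
  fixes \<phi> :: "real \<Rightarrow> complex" and B R :: real and M m1 :: int
  assumes \<phi>m[measurable]: "\<phi> \<in> borel_measurable lborel"
    and bnd: "\<And>x. cmod (\<phi> x) \<le> B"
    and Rdef: "R = 2 powr real_of_int M"
    and supp: "\<And>x. R < x \<Longrightarrow> \<phi> x = 0"
    and mean0: "\<And>m. M \<le> m \<Longrightarrow> integral\<^sup>L lborel (\<lambda>x. indicator (C m 0) x * \<phi> x) = 0"
    and const: "\<And>x y. 0 < x \<Longrightarrow> 0 < y \<Longrightarrow> eqv m1 x y \<Longrightarrow> \<phi> x = \<phi> y"
    and m1M: "m1 < M"
begin

definition "a m k = integral\<^sup>L lborel (\<lambda>x. indicator (C m k) x * \<phi> x)"
definition "nn m k = integral\<^sup>L lborel (\<lambda>x. indicator (C m k) x * (cmod (\<phi> x))\<^sup>2)"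
definition "NN = integral\<^sup>L lborel (\<lambda>x. indicator {0<..} x * (cmod (\<phi> x))\<^sup>2)"
definition "T m = (\<Sum>k<kb R m. (cmod (a m k))\<^sup>2)"
definition "P1 = integral\<^sup>L lborel (\<lambda>x. indicator {0<..} x * cmod (\<phi> x))"

lemma \<phi>b[measurable]: "\<phi> \<in> borel_measurable borel" using \<phi>m by simp

lemma R_pos: "0 < R" unfolding Rdef by simp

lemma B_nonneg: "0 \<le> B" using bnd[of 0] norm_ge_zero[of "\<phi> 0"] by linarith

lemma bnd2: "\<bar>(cmod (\<phi> x))\<^sup>2\<bar> \<le> B\<^sup>2"
  using bnd[of x] by (simp add: power_mono)

lemma bnd1: "\<bar>cmod (\<phi> x)\<bar> \<le> B"
  using bnd[of x] by simp

lemma nn_sum: "NN = (\<Sum>k<kb R m. nn m k)"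
proof -
  have "(\<lambda>x. indicator {0<..} x * (cmod (\<phi> x))\<^sup>2) = (\<lambda>x. \<Sum>k<kb R m. indicator (C m k) x * (cmod (\<phi> x))\<^sup>2)"
    by (rule ext, rule sum_C_1d[OF R_pos]) (simp add: supp)
  then show ?thesis unfolding NN_def nn_def
    by (simp only:) (rule Bochner_Integration.integral_sum, rule integrable_C_real[OF _ bnd2], measurable)
qed

lemma P1_sum: "P1 = (\<Sum>k<kb R m. integral\<^sup>L lborel (\<lambda>x. indicator (C m k) x * cmod (\<phi> x)))"
proof -
  have "(\<lambda>x. indicator {0<..} x * cmod (\<phi> x)) = (\<lambda>x. \<Sum>k<kb R m. indicator (C m k) x * cmod (\<phi> x))"
    by (rule ext, rule sum_C_1d[OF R_pos]) (simp add: supp)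
  then show ?thesis unfolding P1_def
    by (simp only:) (rule Bochner_Integration.integral_sum, rule integrable_C_real[OF _ bnd1], measurable)
qed

lemma nn_nonneg: "0 \<le> nn m k" unfolding nn_def by (rule Bochner_Integration.integral_nonneg) (auto simp: indicator_def)
lemma NN_nonneg: "0 \<le> NN" unfolding NN_def by (rule Bochner_Integration.integral_nonneg) (auto simp: indicator_def)
lemma T_nonneg: "0 \<le> T m" unfolding T_def by (intro sum_nonneg) auto

lemma cnj_int: "integral\<^sup>L lborel (\<lambda>x. indicator (C m k) x * cnj (\<phi> x)) = cnj (a m k)"
proof -
  have "(\<lambda>x. indicator (C m k) x * cnj (\<phi> x)) = (\<lambda>x. cnj (indicator (C m k) x * \<phi> x))"
    by (auto simp: indicator_def)
  then show ?thesis unfolding a_def by (simp only:) (rule Bochner_Integration.integral_cnj)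
qed

lemma cnj_m[measurable]: "(\<lambda>x. cnj (\<phi> x)) \<in> borel_measurable lborel"
proof -
  have "cnj \<in> borel_measurable borel"
    by (rule borel_measurable_continuous_onI) (intro continuous_intros)
  then show ?thesis using measurable_compose[OF \<phi>m] by simp
qed
lemma sq_m[measurable]: "(\<lambda>x. complex_of_real ((cmod (\<phi> x))\<^sup>2)) \<in> borel_measurable lborel" by measurable
lemma abs_m[measurable]: "(\<lambda>x. complex_of_real (cmod (\<phi> x))) \<in> borel_measurable lborel" by measurable

lemma Tlev:
  shows "integrable (lborel \<Otimes>\<^sub>M lborel) (\<lambda>q. indicator (Eq m) q * (\<phi> (fst q) * cnj (\<phi> (snd q))))"
    and "integral\<^sup>L (lborel \<Otimes>\<^sub>M lborel) (\<lambda>q. indicator (Eq m) q * (\<phi> (fst q) * cnj (\<phi> (snd q)))) = of_real (T m)"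
proof -
  have b2: "\<And>x. norm (cnj (\<phi> x)) \<le> B" using bnd by simp
  have z: "\<And>x y. R < x \<Longrightarrow> R < y \<Longrightarrow> \<phi> x * cnj (\<phi> y) = 0" using supp by simp
  show "integrable (lborel \<Otimes>\<^sub>M lborel) (\<lambda>q. indicator (Eq m) q * (\<phi> (fst q) * cnj (\<phi> (snd q))))"
    by (rule level_prod(1)[OF \<phi>m cnj_m bnd b2 R_pos z])
  have "integral\<^sup>L (lborel \<Otimes>\<^sub>M lborel) (\<lambda>q. indicator (Eq m) q * (\<phi> (fst q) * cnj (\<phi> (snd q))))
     = (\<Sum>k<kb R m. integral\<^sup>L lborel (\<lambda>x. indicator (C m k) x * \<phi> x) * integral\<^sup>L lborel (\<lambda>x. indicator (C m k) x * cnj (\<phi> x)))"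
    by (rule level_prod(2)[OF \<phi>m cnj_m bnd b2 R_pos z])
  also have "\<dots> = (\<Sum>k<kb R m. a m k * cnj (a m k))"
    unfolding cnj_int by (simp add: a_def)
  also have "\<dots> = of_real (T m)" unfolding T_def by (simp add: complex_norm_square[symmetric])
  finally show "integral\<^sup>L (lborel \<Otimes>\<^sub>M lborel) (\<lambda>q. indicator (Eq m) q * (\<phi> (fst q) * cnj (\<phi> (snd q)))) = of_real (T m)" .
qed


definition "sq x = complex_of_real ((cmod (\<phi> x))\<^sup>2)"

lemma sq_meas[measurable]: "sq \<in> borel_measurable lborel" unfolding sq_def by measurable

lemma sq_bnd: "norm (sq x) \<le> B\<^sup>2" unfolding sq_def by (subst norm_of_real) (rule bnd2)

lemma sq_int: "integral\<^sup>L lborel (\<lambda>x. indicator (C m k) x * sq x) = of_real (nn m k)"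
proof -
  have "(\<lambda>x. indicator (C m k) x * sq x) = (\<lambda>x. complex_of_real (indicator (C m k) x * (cmod (\<phi> x))\<^sup>2))"
    unfolding sq_def by (auto simp: indicator_def)
  then show ?thesis unfolding nn_def by (simp only:) (rule integral_complex_of_real)
qed

lemma one_bnd: "norm (1::complex) \<le> 1" by simp
lemma one_meas: "(\<lambda>x::real. 1::complex) \<in> borel_measurable lborel" by simp

lemma Ulev:
  shows "integrable (lborel \<Otimes>\<^sub>M lborel) (\<lambda>q. indicator (Eq m) q * complex_of_real ((cmod (\<phi> (fst q) - \<phi> (snd q)))\<^sup>2))"
    and "integral\<^sup>L (lborel \<Otimes>\<^sub>M lborel) (\<lambda>q. indicator (Eq m) q * complex_of_real ((cmod (\<phi> (fst q) - \<phi> (snd q)))\<^sup>2))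
        = of_real (2 * 2 powr real_of_int m * NN - 2 * T m)"
proof -
  have b2: "\<And>x. norm (cnj (\<phi> x)) \<le> B" using bnd by simp
  have z1: "\<And>x y. R < x \<Longrightarrow> R < y \<Longrightarrow> sq x * 1 = 0" using supp by (simp add: sq_def)
  have z2: "\<And>x y. R < x \<Longrightarrow> R < y \<Longrightarrow> 1 * sq y = 0" using supp by (simp add: sq_def)
  have z3: "\<And>x y. R < x \<Longrightarrow> R < y \<Longrightarrow> \<phi> x * cnj (\<phi> y) = 0" using supp by simp
  have z4: "\<And>x y. R < x \<Longrightarrow> R < y \<Longrightarrow> cnj (\<phi> x) * \<phi> y = 0" using supp by simp
  note L1 = level_prod[OF sq_meas one_meas sq_bnd one_bnd R_pos z1, where m = m]
  note L2 = level_prod[OF one_meas sq_meas one_bnd sq_bnd R_pos z2, where m = m]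
  note L3 = level_prod[OF \<phi>m cnj_m bnd b2 R_pos z3, where m = m]
  note L4 = level_prod[OF cnj_m \<phi>m b2 bnd R_pos z4, where m = m]
  have pw: "(\<lambda>q. indicator (Eq m) q * complex_of_real ((cmod (\<phi> (fst q) - \<phi> (snd q)))\<^sup>2)) =
     (\<lambda>q. indicator (Eq m) q * (sq (fst q) * 1) + indicator (Eq m) q * (1 * sq (snd q))
        - indicator (Eq m) q * (\<phi> (fst q) * cnj (\<phi> (snd q))) - indicator (Eq m) q * (cnj (\<phi> (fst q)) * \<phi> (snd q)))"
    unfolding sq_def complex_norm_square by (auto simp: fun_eq_iff algebra_simps)
  show "integrable (lborel \<Otimes>\<^sub>M lborel) (\<lambda>q. indicator (Eq m) q * complex_of_real ((cmod (\<phi> (fst q) - \<phi> (snd q)))\<^sup>2))"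
    unfolding pw using L1(1) L2(1) L3(1) L4(1) by (intro Bochner_Integration.integrable_diff Bochner_Integration.integrable_add)
  have e4: "(\<Sum>k<kb R m. integral\<^sup>L lborel (\<lambda>x. indicator (C m k) x * cnj (\<phi> x)) * integral\<^sup>L lborel (\<lambda>x. indicator (C m k) x * \<phi> x))
     = of_real (T m)"
    unfolding cnj_int a_def[symmetric] T_def by (simp add: complex_norm_square[symmetric] mult.commute)
  have e3: "(\<Sum>k<kb R m. integral\<^sup>L lborel (\<lambda>x. indicator (C m k) x * \<phi> x) * integral\<^sup>L lborel (\<lambda>x. indicator (C m k) x * cnj (\<phi> x)))
     = of_real (T m)"
    unfolding cnj_int a_def[symmetric] T_def by (simp add: complex_norm_square[symmetric])
  have e1: "(\<Sum>k<kb R m. integral\<^sup>L lborel (\<lambda>x. indicator (C m k) x * sq x) * integral\<^sup>L lborel (\<lambda>x. indicator (C m k) x * 1))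
     = of_real (2 powr real_of_int m * NN)"
    unfolding sq_int integral_C_one nn_sum[of m] by (simp add: sum_distrib_left mult.commute)
  have e2: "(\<Sum>k<kb R m. integral\<^sup>L lborel (\<lambda>x. indicator (C m k) x * 1) * integral\<^sup>L lborel (\<lambda>x. indicator (C m k) x * sq x))
     = of_real (2 powr real_of_int m * NN)"
    unfolding sq_int integral_C_one nn_sum[of m] by (simp add: sum_distrib_left)
  show "integral\<^sup>L (lborel \<Otimes>\<^sub>M lborel) (\<lambda>q. indicator (Eq m) q * complex_of_real ((cmod (\<phi> (fst q) - \<phi> (snd q)))\<^sup>2))
        = of_real (2 * 2 powr real_of_int m * NN - 2 * T m)"
    unfolding pw using L1 L2 L3 L4 e1 e2 e3 e4
    by (simp add: Bochner_Integration.integral_diff Bochner_Integration.integral_add)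
qed

end

lemma sum_even_odd: "(\<Sum>j<2 * (K::nat). f j) = (\<Sum>k<K. f (2 * k) + f (2 * k + 1))"
  by (induction K) (simp_all add: algebra_simps)

lemma sq_add_le: "(cmod (u + v))\<^sup>2 \<le> 2 * (cmod u)\<^sup>2 + 2 * (cmod v)\<^sup>2"
proof -
  have "(cmod (u + v))\<^sup>2 \<le> (cmod u + cmod v)\<^sup>2"
    by (intro power_mono norm_triangle_ineq) auto
  also have "\<dots> \<le> 2 * (cmod u)\<^sup>2 + 2 * (cmod v)\<^sup>2"
    using sum_squares_bound[of "cmod u" "cmod v"] by (simp add: power2_eq_square algebra_simps)
  finally show ?thesis .
qed

lemma ceiling_double_le: "\<lceil>2 * t\<rceil> \<le> 2 * \<lceil>t::real\<rceil>"
  by (simp add: ceiling_le_iff)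

context sf begin

lemma kb_large: assumes "M \<le> m" shows "kb R m = 1"
proof -
  have "R / 2 powr real_of_int m = 2 powr real_of_int (M - m)"
    unfolding Rdef by (simp add: powr_diff)
  moreover have "2 powr real_of_int (M - m) \<le> 2 powr 0" by (rule powr_mono) (use assms in auto)
  then have "2 powr real_of_int (M - m) \<le> 1" by simp
  moreover have "0 < 2 powr real_of_int (M - m)" by simp
  ultimately have "\<lceil>R / 2 powr real_of_int m\<rceil> = 1" by (subst ceiling_eq_iff) auto
  then show ?thesis unfolding kb_def by simp
qed

lemma T_large: "M \<le> m \<Longrightarrow> T m = 0"
  unfolding T_def using kb_large mean0 by (simp add: a_def)

lemma T_fine: assumes "m \<le> m1" shows "T m = 2 powr real_of_int m * NN"
proof -
  have "(cmod (a m k))\<^sup>2 = 2 powr real_of_int m * nn m k" for k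
  proof -
    define x0 where "x0 = (real k + 1) * 2 powr real_of_int m"
    have x0C: "x0 \<in> C m k" unfolding x0_def C_def by simp
    have cst: "x \<in> C m k \<Longrightarrow> \<phi> x = \<phi> x0" for x
    proof -
      assume x: "x \<in> C m k"
      have "cell m x = int k + 1" "cell m x0 = int k + 1" using x x0C by (simp_all add: mem_C_iff)
      then have "eqv m x x0" unfolding eqv_def by simp
      then have "eqv m1 x x0" using assms by (rule eqv_mono)
      then show ?thesis by (rule const[OF C_pos[OF x] C_pos[OF x0C]])
    qed
    have ee: "(\<lambda>x. indicator (C m k) x * \<phi> x) = (\<lambda>x. \<phi> x0 * (indicator (C m k) x * 1))"
      using cst by (auto simp: indicator_def)
    have ea: "a m k = \<phi> x0 * of_real (2 powr real_of_int m)"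
      unfolding a_def ee by (simp only: integral_mult_right_zero integral_C_one)
    have "(\<lambda>x. indicator (C m k) x * (cmod (\<phi> x))\<^sup>2) = (\<lambda>x. (cmod (\<phi> x0))\<^sup>2 * indicator (C m k) x)"
      using cst by (auto simp: indicator_def)
    then have en: "nn m k = (cmod (\<phi> x0))\<^sup>2 * 2 powr real_of_int m"
      unfolding nn_def using measure_C[of m k] emeasure_C[of m k] by simp
    show ?thesis unfolding ea en by (simp add: norm_mult power2_eq_square algebra_simps)
  qed
  then show ?thesis unfolding T_def nn_sum[of m] by (simp add: sum_distrib_left)
qed

lemma a_beyond: "kb R m \<le> k \<Longrightarrow> a m k = 0"
proof -
  assume k: "kb R m \<le> k"
  have "(\<lambda>x. indicator (C m k) x * \<phi> x) = (\<lambda>x. 0)"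
    using C_beyond[OF R_pos k] supp by (auto simp: indicator_def)
  then show ?thesis unfolding a_def by simp
qed

lemma C_split: "indicator (C m k) x = (indicator (C (m - 1) (2 * k)) x + indicator (C (m - 1) (2 * k + 1)) x :: complex)"
proof -
  have cs: "cell m x = \<lceil>real_of_int (cell (m - 1) x) / 2\<rceil>" using cell_succ[of "m - 1" x] by simp
  have "x \<in> C m k \<longleftrightarrow> cell (m - 1) x = 2 * int k + 1 \<or> cell (m - 1) x = 2 * int k + 2"
    unfolding mem_C_iff cs by (subst ceiling_eq_iff) linarith
  then show ?thesis unfolding indicator_def mem_C_iff by auto
qed

lemma a_split: "a m k = a (m - 1) (2 * k) + a (m - 1) (2 * k + 1)"
proof -
  have "(\<lambda>x. indicator (C m k) x * \<phi> x) =
     (\<lambda>x. indicator (C (m - 1) (2 * k)) x * \<phi> x + indicator (C (m - 1) (2 * k + 1)) x * \<phi> x)"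
    by (rule ext) (simp only: C_split[of m k] distrib_right)
  then show ?thesis unfolding a_def
    by (simp add: Bochner_Integration.integral_add integrable_C[OF \<phi>m bnd])
qed

lemma T_mono: "T m \<le> 2 * T (m - 1)"
proof -
  have kb2: "kb R (m - 1) \<le> 2 * kb R m"
  proof -
    have "R / 2 powr real_of_int (m - 1) = 2 * (R / 2 powr real_of_int m)"
      by (simp add: powr_diff)
    then have "\<lceil>R / 2 powr real_of_int (m - 1)\<rceil> \<le> 2 * \<lceil>R / 2 powr real_of_int m\<rceil>"
      using ceiling_double_le[of "R / 2 powr real_of_int m"] by simp
    then have "kb R (m - 1) \<le> nat (2 * \<lceil>R / 2 powr real_of_int m\<rceil>)"
      unfolding kb_def by (rule nat_mono)
    then show ?thesis unfolding kb_def by (simp add: nat_mult_distrib)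
  qed
  have "T (m - 1) = (\<Sum>j<2 * kb R m. (cmod (a (m - 1) j))\<^sup>2)"
    unfolding T_def
    by (rule sum.mono_neutral_left) (use kb2 a_beyond in auto)
  also have "\<dots> = (\<Sum>k<kb R m. (cmod (a (m - 1) (2 * k)))\<^sup>2 + (cmod (a (m - 1) (2 * k + 1)))\<^sup>2)"
    by (rule sum_even_odd)
  finally have e: "T (m - 1) = \<dots>" .
  have "T m = (\<Sum>k<kb R m. (cmod (a (m - 1) (2 * k) + a (m - 1) (2 * k + 1)))\<^sup>2)"
    unfolding T_def a_split[of m] ..
  also have "\<dots> \<le> (\<Sum>k<kb R m. 2 * ((cmod (a (m - 1) (2 * k)))\<^sup>2 + (cmod (a (m - 1) (2 * k + 1)))\<^sup>2))"
    by (intro sum_mono) (simp add: sq_add_le[simplified] algebra_simps)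
  also have "\<dots> = 2 * T (m - 1)" unfolding e by (simp add: sum_distrib_left)
  finally show ?thesis .
qed

end

context sf begin
definition "absc x = complex_of_real (cmod (\<phi> x))"
lemma absc_meas[measurable]: "absc \<in> borel_measurable lborel" unfolding absc_def by measurable
lemma absc_bnd: "norm (absc x) \<le> B" unfolding absc_def using bnd by simp

definition "beta m k = integral\<^sup>L lborel (\<lambda>x. indicator (C m k) x * cmod (\<phi> x))"

lemma absc_int: "integral\<^sup>L lborel (\<lambda>x. indicator (C m k) x * absc x) = of_real (beta m k)"
proof -
  have "(\<lambda>x. indicator (C m k) x * absc x) = (\<lambda>x. complex_of_real (indicator (C m k) x * cmod (\<phi> x)))"
    unfolding absc_def by (auto simp: indicator_def)
  then show ?thesis unfolding beta_def by (simp only:) (rule integral_complex_of_real)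
qed

lemma beta_nonneg: "0 \<le> beta m k"
  unfolding beta_def by (rule Bochner_Integration.integral_nonneg) (auto simp: indicator_def)

lemma beta_le: "beta m k \<le> B * 2 powr real_of_int m"
proof -
  have "beta m k \<le> integral\<^sup>L lborel (\<lambda>x. B * indicator (C m k) x)"
    unfolding beta_def
  proof (rule integral_mono)
    show "integrable lborel (\<lambda>x. indicator (C m k) x * cmod (\<phi> x))"
      by (rule integrable_C_real[OF _ bnd1]) measurable
    show "integrable lborel (\<lambda>x. B * indicator (C m k) x)"
      using emeasure_C[of m k] by (intro integrable_mult_right integrable_real_indicator) auto
  qed (auto simp: indicator_def bnd)
  also have "\<dots> = B * 2 powr real_of_int m" using measure_C[of m k] by simp
  finally show ?thesis .
qed

lemma P1_nonneg: "0 \<le> P1"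
  unfolding P1_def by (rule Bochner_Integration.integral_nonneg) (auto simp: indicator_def)

definition "WQ m = (if M \<le> m then P1\<^sup>2 else B * 2 powr real_of_int m * P1)"

lemma Qnorm:
  shows "integrable (lborel \<Otimes>\<^sub>M lborel) (\<lambda>q. indicator (Eq m) q * norm (\<phi> (fst q) * cnj (\<phi> (snd q))))"
    and "integral\<^sup>L (lborel \<Otimes>\<^sub>M lborel) (\<lambda>q. indicator (Eq m) q * norm (\<phi> (fst q) * cnj (\<phi> (snd q)))) \<le> WQ m"
proof -
  have z: "\<And>x y. R < x \<Longrightarrow> R < y \<Longrightarrow> absc x * absc y = 0" using supp by (simp add: absc_def)
  note L = level_prod[OF absc_meas absc_meas absc_bnd absc_bnd R_pos z, where m = m]
  have pw: "(\<lambda>q. complex_of_real (indicator (Eq m) q * norm (\<phi> (fst q) * cnj (\<phi> (snd q))))) =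
     (\<lambda>q. indicator (Eq m) q * (absc (fst q) * absc (snd q)))"
    unfolding absc_def by (auto simp: indicator_def norm_mult)
  show I: "integrable (lborel \<Otimes>\<^sub>M lborel) (\<lambda>q. indicator (Eq m) q * norm (\<phi> (fst q) * cnj (\<phi> (snd q))))"
    using L(1) unfolding pw[symmetric] complex_of_real_integrable_eq .
  have "complex_of_real (integral\<^sup>L (lborel \<Otimes>\<^sub>M lborel) (\<lambda>q. indicator (Eq m) q * norm (\<phi> (fst q) * cnj (\<phi> (snd q)))))
      = integral\<^sup>L (lborel \<Otimes>\<^sub>M lborel) (\<lambda>q. complex_of_real (indicator (Eq m) q * norm (\<phi> (fst q) * cnj (\<phi> (snd q)))))"
    by (rule integral_complex_of_real[symmetric])
  also have "\<dots> = integral\<^sup>L (lborel \<Otimes>\<^sub>M lborel) (\<lambda>q. indicator (Eq m) q * (absc (fst q) * absc (snd q)))"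
    unfolding pw ..
  also have "\<dots> = (\<Sum>k<kb R m. integral\<^sup>L lborel (\<lambda>x. indicator (C m k) x * absc x) * integral\<^sup>L lborel (\<lambda>x. indicator (C m k) x * absc x))"
    by (rule L(2))
  also have "\<dots> = of_real (\<Sum>k<kb R m. (beta m k)\<^sup>2)" unfolding absc_int by (simp add: power2_eq_square)
  finally have e: "integral\<^sup>L (lborel \<Otimes>\<^sub>M lborel) (\<lambda>q. indicator (Eq m) q * norm (\<phi> (fst q) * cnj (\<phi> (snd q))))
      = (\<Sum>k<kb R m. (beta m k)\<^sup>2)" by (simp only: of_real_eq_iff)
  have P1b: "P1 = (\<Sum>k<kb R m. beta m k)" unfolding P1_sum[of m] beta_def ..
  show "integral\<^sup>L (lborel \<Otimes>\<^sub>M lborel) (\<lambda>q. indicator (Eq m) q * norm (\<phi> (fst q) * cnj (\<phi> (snd q)))) \<le> WQ m"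
  proof (cases "M \<le> m")
    case True
    have "(\<Sum>k<kb R m. (beta m k)\<^sup>2) \<le> P1 * (\<Sum>k<kb R m. beta m k)"
      unfolding P1b by (intro sum_sq_le beta_nonneg member_le_sum) auto
    then show ?thesis unfolding e WQ_def using True P1b by (simp add: power2_eq_square)
  next
    case False
    have "(\<Sum>k<kb R m. (beta m k)\<^sup>2) \<le> (B * 2 powr real_of_int m) * (\<Sum>k<kb R m. beta m k)"
      by (intro sum_sq_le beta_nonneg beta_le)
    then show ?thesis unfolding e WQ_def using False P1b by simp
  qed
qed

end

lemma cs_weighted:
  fixes e A Bv :: "nat \<Rightarrow> real"
  assumes "\<And>i. i \<in> I \<Longrightarrow> 0 \<le> e i" "\<And>i. i \<in> I \<Longrightarrow> 0 < A i" "\<And>i. i \<in> I \<Longrightarrow> 0 < Bv i"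
    and "\<And>i. i \<in> I \<Longrightarrow> A i * Bv i = g"
  shows "g * (\<Sum>i\<in>I. e i)\<^sup>2 \<le> (\<Sum>i\<in>I. e i * A i) * (\<Sum>i\<in>I. e i * Bv i)"
proof -
  have g: "I \<noteq> {} \<Longrightarrow> 0 < g" using assms(2,3,4) by (metis ex_in_conv mult_pos_pos)
  show ?thesis
  proof (cases "I = {}")
    case True then show ?thesis by simp
  next
    case False
    have "(\<Sum>i\<in>I. sqrt (e i * A i) * sqrt (e i * Bv i))\<^sup>2 \<le>
        (\<Sum>i\<in>I. (sqrt (e i * A i))\<^sup>2) * (\<Sum>i\<in>I. (sqrt (e i * Bv i))\<^sup>2)"
      by (rule Cauchy_Schwarz_ineq_sum)
    moreover have "(\<Sum>i\<in>I. sqrt (e i * A i) * sqrt (e i * Bv i)) = sqrt g * (\<Sum>i\<in>I. e i)"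
      unfolding sum_distrib_left
    proof (rule sum.cong)
      fix i assume i: "i \<in> I"
      have "sqrt (e i * A i) * sqrt (e i * Bv i) = sqrt (e i * e i * (A i * Bv i))"
        by (simp add: real_sqrt_mult[symmetric] algebra_simps)
      also have "\<dots> = e i * sqrt g" using assms(1,4)[OF i] by (simp add: real_sqrt_mult)
      finally show "sqrt (e i * A i) * sqrt (e i * Bv i) = sqrt g * e i" by simp
    qed simp
    moreover have "(\<Sum>i\<in>I. (sqrt (e i * A i))\<^sup>2) = (\<Sum>i\<in>I. e i * A i)"
      using assms(1,2) by (intro sum.cong) (auto simp: less_imp_le)
    moreover have "(\<Sum>i\<in>I. (sqrt (e i * Bv i))\<^sup>2) = (\<Sum>i\<in>I. e i * Bv i)"
      using assms(1,3) by (intro sum.cong) (auto simp: less_imp_le)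
    ultimately show ?thesis using g[OF False] by (simp add: power_mult_distrib)
  qed
qed

lemma ind_pred: "ind (m - 1 \<le> (x::int)) = ind (m \<le> x) + ind (x = m - 1)"
  unfolding ind_def by auto

lemma u_rep:
  fixes u :: "int \<Rightarrow> real" and NN :: real and m1 M :: int
  assumes fine: "\<And>m. m \<le> m1 \<Longrightarrow> u m = NN" and large: "\<And>m. M \<le> m \<Longrightarrow> u m = 0" and m1M: "m1 < M"
  defines "e \<equiv> \<lambda>i::nat. u (m1 + int i) - u (m1 + int i + 1)"
  shows "u m = (\<Sum>i<nat (M - m1). e i * ind (m \<le> m1 + int i))"
proof (cases "M \<le> m")
  case True
  have "ind (m \<le> m1 + int i) = 0" if "i < nat (M - m1)" for i using that True unfolding ind_def by auto
  then show ?thesis using large[OF True] by simp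
next
  case False
  then have "m \<le> M" by simp
  then show ?thesis
  proof (induction rule: int_le_induct)
    case base
    have "ind (M \<le> m1 + int i) = 0" if "i < nat (M - m1)" for i using that unfolding ind_def by auto
    then show ?case using large[of M] by simp
  next
    case (step m)
    have "(\<Sum>i<nat (M - m1). e i * ind (m - 1 \<le> m1 + int i)) =
          (\<Sum>i<nat (M - m1). e i * ind (m \<le> m1 + int i)) + (\<Sum>i<nat (M - m1). e i * ind (m1 + int i = m - 1))"
      unfolding ind_pred by (simp add: algebra_simps sum.distrib)
    also have "(\<Sum>i<nat (M - m1). e i * ind (m1 + int i = m - 1)) = u (m - 1) - u m"
    proof (cases "m1 \<le> m - 1")
      case True
      define i0 where "i0 = nat (m - 1 - m1)"
      have i0: "i0 < nat (M - m1)" "m1 + int i0 = m - 1" unfolding i0_def using True step.hyps by auto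
      have "(\<Sum>i<nat (M - m1). e i * ind (m1 + int i = m - 1)) = (\<Sum>i<nat (M - m1). if i = i0 then e i else 0)"
        using i0(2) by (intro sum.cong) (auto simp: ind_def)
      also have "\<dots> = e i0" using i0 by simp
      also have "\<dots> = u (m - 1) - u m" unfolding e_def using i0 by simp
      finally show ?thesis .
    next
      case False
      have "(\<Sum>i<nat (M - m1). e i * ind (m1 + int i = m - 1)) = 0"
        using False by (intro sum.neutral) (auto simp: ind_def)
      moreover have "u (m - 1) = NN" "u m = NN" using False fine by auto
      ultimately show ?thesis by simp
    qed
    finally show ?case using step.IH by simp
  qed
qed


lemma wt_pow: "wt p m * 2 powr real_of_int m = (1 - 2 powr p) * 2 powr ((p + 1) * real_of_int m)"
  unfolding wt_def by (simp add: powr_add[symmetric] algebra_simps)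

lemma pow_geo: "(2::real) powr (y + z * real n) = 2 powr y * (2 powr z) ^ n"
  by (simp add: powr_add powr_power mult.commute)

lemma shift_sums:
  fixes f :: "nat \<Rightarrow> real"
  assumes "\<And>n. n < d \<Longrightarrow> f n = 0" "(\<lambda>n. f (n + d)) sums S"
  shows "f sums S"
  using assms(2) unfolding sums_iff_shift using assms(1) by simp

lemma main_alg:
  fixes s NN :: real and u T :: "int \<Rightarrow> real" and M m1 :: int
  assumes s: "0 < s" "s < 1/2"
    and fine: "\<And>m. m \<le> m1 \<Longrightarrow> u m = NN" and large: "\<And>m. M \<le> m \<Longrightarrow> u m = 0"
    and anti: "\<And>m. u m \<le> u (m - 1)" and m1M: "m1 < M"
    and Tu: "\<And>m. T m = 2 powr real_of_int m * u m"
  defines "Qt \<equiv> \<lambda>n::nat. wt (2 * s - 1) (M + int n) * T (M + int n) + wt (2 * s - 1) (M - int n - 1) * T (M - int n - 1)"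
    and "Et \<equiv> \<lambda>n::nat. wt (- (2 * s + 1)) (m1 + 1 + int n) * (2 * 2 powr real_of_int (m1 + 1 + int n) * NN - 2 * T (m1 + 1 + int n))
        + wt (- (2 * s + 1)) (m1 + 1 - int n - 1) * (2 * 2 powr real_of_int (m1 + 1 - int n - 1) * NN - 2 * T (m1 + 1 - int n - 1))"
  shows "summable Qt" "summable Et" "dgamma s * NN\<^sup>2 \<le> suminf Qt * suminf Et"
proof -
  define K where "K = nat (M - m1)"
  define e where "e = (\<lambda>i::nat. u (m1 + int i) - u (m1 + int i + 1))"
  define a where "a = 2 * s - 1"
  define b where "b = - (2 * s + 1)"
  define q where "q = (2::real) powr (- 2 * s)"
  have q: "0 < q" "q < 1" unfolding q_def using s by (auto simp: powr_less_one)
  have urep: "u m = (\<Sum>i<K. e i * ind (m \<le> m1 + int i))" for m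
    unfolding K_def e_def by (rule u_rep[OF fine large m1M])
  have e_nonneg: "0 \<le> e i" for i unfolding e_def using anti[of "m1 + int i + 1"] by simp
  have sum_e: "(\<Sum>i<K. e i) = NN"
    using urep[of m1] fine[of m1] by (simp add: ind_def)
  have a1: "1 - 2 powr a > 0" unfolding a_def using s by (simp add: powr_less_one)
  have b1: "1 - 2 powr b > 0" unfolding b_def using s by (simp add: powr_less_one)
  define A where "A i = (1 - 2 powr a) * 2 powr (2 * s * real_of_int (m1 + int i)) / (1 - q)" for i :: nat
  define Bv where "Bv i = 2 * (1 - 2 powr b) * 2 powr (- 2 * s * real_of_int (m1 + 1 + int i)) / (1 - q)" for i :: nat
  define tq where "tq n i = wt a (M + int n) * 2 powr real_of_int (M + int n) * ind (M + int n \<le> m1 + int i)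
     + wt a (M - int n - 1) * 2 powr real_of_int (M - int n - 1) * ind (M - int n - 1 \<le> m1 + int i)" for n i :: nat
  define te where "te n i = wt b (m1 + 1 + int n) * (2 * 2 powr real_of_int (m1 + 1 + int n)) * ind (m1 + int i < m1 + 1 + int n)
     + wt b (m1 + 1 - int n - 1) * (2 * 2 powr real_of_int (m1 + 1 - int n - 1)) * ind (m1 + int i < m1 + 1 - int n - 1)" for n i :: nat
  have Qt_eq: "Qt n = (\<Sum>i<K. e i * tq n i)" for n
    unfolding Qt_def Tu urep tq_def a_def[symmetric]
    by (simp add: sum_distrib_left sum_distrib_right sum.distrib algebra_simps)
  have NNu: "NN - u m = (\<Sum>i<K. e i * ind (m1 + int i < m))" for m
  proof -
    have "NN - u m = (\<Sum>i<K. e i * (1 - ind (m \<le> m1 + int i)))"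
      unfolding sum_e[symmetric] urep by (simp add: sum_subtractf algebra_simps)
    also have "\<dots> = (\<Sum>i<K. e i * ind (m1 + int i < m))" by (intro sum.cong) (auto simp: ind_def)
    finally show ?thesis .
  qed
  have Et_eq: "Et n = (\<Sum>i<K. e i * te n i)" for n
  proof -
    have U: "2 * 2 powr real_of_int m * NN - 2 * T m = 2 * 2 powr real_of_int m * (NN - u m)" for m
      unfolding Tu by (simp add: algebra_simps)
    show ?thesis unfolding Et_def U NNu te_def b_def[symmetric]
      by (simp add: sum_distrib_left sum_distrib_right sum.distrib algebra_simps)
  qed
  have tq_sums: "(\<lambda>n. tq n i) sums A i" if i: "i < K" for i
  proof -
    define d where "d = nat (M - 1 - m1 - int i)"
    have d: "int d = M - 1 - m1 - int i" unfolding d_def using i K_def by simp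
    show ?thesis
    proof (rule shift_sums[where d = d])
      fix n assume "n < d"
      then show "tq n i = 0" unfolding tq_def ind_def using d i K_def by auto
    next
      have "tq (n + d) i = (1 - 2 powr a) * 2 powr (2 * s * real_of_int (m1 + int i)) * q ^ n" for n
      proof -
        have "tq (n + d) i = wt a (m1 + int i - int n) * 2 powr real_of_int (m1 + int i - int n)"
          unfolding tq_def ind_def using d i K_def by (auto simp: algebra_simps)
        also have "\<dots> = (1 - 2 powr a) * 2 powr (2 * s * real_of_int (m1 + int i) + (- 2 * s) * real n)"
          unfolding wt_pow a_def by (simp add: algebra_simps)
        also have "\<dots> = (1 - 2 powr a) * 2 powr (2 * s * real_of_int (m1 + int i)) * q ^ n"
          unfolding pow_geo q_def by simp
        finally show ?thesis .
      qed
      moreover have "(\<lambda>n. (1 - 2 powr a) * 2 powr (2 * s * real_of_int (m1 + int i)) * q ^ n) sums A i"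
      proof -
        have "(\<lambda>n. ((1 - 2 powr a) * 2 powr (2 * s * real_of_int (m1 + int i))) * q ^ n) sums
            (((1 - 2 powr a) * 2 powr (2 * s * real_of_int (m1 + int i))) * (1 / (1 - q)))"
          by (rule sums_mult, rule geometric_sums) (use q in simp)
        then show ?thesis unfolding A_def by simp
      qed
      ultimately show "(\<lambda>n. tq (n + d) i) sums A i" by simp
    qed
  qed
  have te_sums: "(\<lambda>n. te n i) sums Bv i" if i: "i < K" for i
  proof (rule shift_sums[where d = i])
    fix n assume "n < i"
    then show "te n i = 0" unfolding te_def ind_def by auto
  next
    have "te (n + i) i = 2 * (1 - 2 powr b) * 2 powr (- 2 * s * real_of_int (m1 + 1 + int i)) * q ^ n" for n
    proof -
      have "te (n + i) i = 2 * (wt b (m1 + 1 + int i + int n) * 2 powr real_of_int (m1 + 1 + int i + int n))"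
        unfolding te_def ind_def by (auto simp: algebra_simps)
      also have "\<dots> = 2 * ((1 - 2 powr b) * 2 powr (- 2 * s * real_of_int (m1 + 1 + int i) + (- 2 * s) * real n))"
        unfolding wt_pow b_def by (simp add: algebra_simps)
      also have "\<dots> = 2 * (1 - 2 powr b) * 2 powr (- 2 * s * real_of_int (m1 + 1 + int i)) * q ^ n"
        unfolding pow_geo q_def by simp
      finally show ?thesis .
    qed
    moreover have "(\<lambda>n. 2 * (1 - 2 powr b) * 2 powr (- 2 * s * real_of_int (m1 + 1 + int i)) * q ^ n) sums Bv i"
    proof -
      have "(\<lambda>n. (2 * (1 - 2 powr b) * 2 powr (- 2 * s * real_of_int (m1 + 1 + int i))) * q ^ n) sums
          ((2 * (1 - 2 powr b) * 2 powr (- 2 * s * real_of_int (m1 + 1 + int i))) * (1 / (1 - q)))"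
        by (rule sums_mult, rule geometric_sums) (use q in simp)
      then show ?thesis unfolding Bv_def by simp
    qed
    ultimately show "(\<lambda>n. te (n + i) i) sums Bv i" by simp
  qed
  have Qs: "Qt sums (\<Sum>i<K. e i * A i)"
    unfolding Qt_eq by (intro sums_sum sums_mult tq_sums) auto
  have Es: "Et sums (\<Sum>i<K. e i * Bv i)"
    unfolding Et_eq by (intro sums_sum sums_mult te_sums) auto
  show "summable Qt" using Qs by (rule sums_summable)
  show "summable Et" using Es by (rule sums_summable)
  have Apos: "0 < A i" for i unfolding A_def using a1 q by simp
  have Bpos: "0 < Bv i" for i unfolding Bv_def using b1 q by simp
  have AB: "A i * Bv i = dgamma s" for i
  proof -
    define r where "r = (2::real) powr (2 * s)"
    have r: "1 < r" unfolding r_def using s by simp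
    have e1: "2 powr a = r / 2" unfolding a_def r_def by (simp add: powr_diff)
    have e2a: "(2::real) powr (- (2 * s + 1)) = 1 / 2 powr (2 * s + 1)" by (rule powr_minus_divide)
    have e2b: "(2::real) powr (2 * s + 1) = 2 powr (2 * s) * 2" by (simp add: powr_add)
    have e2: "2 powr b = 1 / (2 * r)" unfolding b_def r_def e2a e2b by simp
    have e3: "q = 1 / r" unfolding q_def r_def by (simp add: powr_minus_divide)
    have e4: "2 powr (1 - 2 * s) = 2 / r" unfolding r_def by (simp add: powr_diff)
    have e5: "2 powr (- (2 * s)) = 1 / r" unfolding r_def by (simp add: powr_minus_divide)
    have e6: "2 powr (2 * s * real_of_int (m1 + int i)) * 2 powr (- 2 * s * real_of_int (m1 + 1 + int i)) = 1 / r"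
      unfolding r_def by (simp add: powr_add[symmetric] powr_minus_divide algebra_simps)
    have "A i * Bv i = 2 * (1 - 2 powr a) * (1 - 2 powr b) * (2 powr (2 * s * real_of_int (m1 + int i)) * 2 powr (- 2 * s * real_of_int (m1 + 1 + int i))) / (1 - q)\<^sup>2"
    proof -
      have gen: "\<And>\<alpha> \<beta> X Y. \<alpha> * X / (1 - q) * (2 * \<beta> * Y / (1 - q)) = 2 * \<alpha> * \<beta> * (X * Y) / (1 - q)\<^sup>2"
        by (simp add: power2_eq_square)
      show ?thesis unfolding A_def Bv_def gen ..
    qed
    also have "\<dots> = dgamma s"
    proof -
      have rn: "r \<noteq> 0" "r - 1 \<noteq> 0" using r by auto
      have h1: "(2 / r - 1) / (1 - 1 / r) = (2 - r) / (r - 1)" using rn by (simp add: field_simps)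
      have h2: "(2 - 1 / r) / (1 - 1 / r) = (2 * r - 1) / (r - 1)" using rn by (simp add: field_simps)
      have h3: "2 * (1 - r / 2) * (1 - 1 / (2 * r)) * (1 / r) / (1 - 1 / r)\<^sup>2 = (2 - r) * (2 * r - 1) / (2 * (r - 1)\<^sup>2)"
      proof -
        have h0: "1 - 1/r = (r-1)/r" using r by (simp add: field_simps)
        have h4: "1 - r/2 = (2-r)/2" by simp
        have h5: "1 - 1/(2*r) = (2*r-1)/(2*r)" using r by (simp add: field_simps)
        have "2 * ((2-r)/2) * ((2*r-1)/(2*r)) * (1/r) = (2-r)*(2*r-1) / (2 * r^2)" using r by (simp add: field_simps power2_eq_square)
        moreover have "((r-1)/r)\<^sup>2 = (r-1)^2 / r^2" by (simp add: power_divide)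
        ultimately have "2 * (1 - r / 2) * (1 - 1 / (2 * r)) * (1 / r) / (1 - 1 / r)\<^sup>2 = ((2-r)*(2*r-1) / (2 * r^2)) / ((r-1)^2 / r^2)"
          unfolding h0 h4 h5 by simp
        also have "\<dots> = (2 - r) * (2 * r - 1) / (2 * (r - 1)\<^sup>2)" using r by (simp add: field_simps)
        finally show ?thesis .
      qed
      show ?thesis unfolding e6 e1 e2 e3 dgamma_def dgamma1_def dgamma2_def e4 e5 h1 h2 h3
        by (simp add: power2_eq_square)
    qed
    finally show ?thesis .
  qed
  have "dgamma s * (\<Sum>i<K. e i)\<^sup>2 \<le> (\<Sum>i<K. e i * A i) * (\<Sum>i<K. e i * Bv i)"
    by (rule cs_weighted) (use e_nonneg Apos Bpos AB in auto)
  then show "dgamma s * NN\<^sup>2 \<le> suminf Qt * suminf Et"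
    unfolding sum_e sums_unique[OF Qs, symmetric] sums_unique[OF Es, symmetric] .
qed

lemma dist_pos: "0 < x \<Longrightarrow> 0 < y \<Longrightarrow> x \<noteq> y \<Longrightarrow> 0 < dyadic_dist x y"
proof -
  assume a: "0 < x" "0 < y" "x \<noteq> y"
  obtain L where "dyadic_dist x y = 2 powr real_of_int L" using dist_level[OF a] by blast
  then show ?thesis by simp
qed

context sf begin

lemma G_meas: "(\<lambda>q. \<phi> (fst q) * cnj (\<phi> (snd q))) \<in> borel_measurable (lborel \<Otimes>\<^sub>M lborel)"
  using cnj_m by measurable

lemma GE_meas: "(\<lambda>q. complex_of_real ((cmod (\<phi> (fst q) - \<phi> (snd q)))\<^sup>2)) \<in> borel_measurable (lborel \<Otimes>\<^sub>M lborel)"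
  by measurable

lemma WQ_summable:
  assumes s: "0 < s" "s < 1/2"
  shows "summable (\<lambda>n. wt (2 * s - 1) (M + int n) * WQ (M + int n) + wt (2 * s - 1) (M - int n - 1) * WQ (M - int n - 1))"
proof -
  define a where "a = 2 * s - 1"
  have e1: "wt a (M + int n) * WQ (M + int n) = ((1 - 2 powr a) * 2 powr (a * real_of_int M) * P1\<^sup>2) * (2 powr a) ^ n" for n
  proof -
    have "wt a (M + int n) = (1 - 2 powr a) * 2 powr (a * real_of_int M + a * real n)"
      unfolding wt_def by (simp add: algebra_simps)
    then show ?thesis unfolding WQ_def pow_geo by simp
  qed
  have e2: "wt a (M - int n - 1) * WQ (M - int n - 1) = (B * P1 * (1 - 2 powr a) * 2 powr ((a + 1) * real_of_int (M - 1))) * (2 powr (- (a + 1))) ^ n" for n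
  proof -
    have "wt a (M - int n - 1) * WQ (M - int n - 1) = B * P1 * (wt a (M - int n - 1) * 2 powr real_of_int (M - int n - 1))"
      unfolding WQ_def by simp
    also have "\<dots> = B * P1 * ((1 - 2 powr a) * 2 powr ((a + 1) * real_of_int (M - 1) + (- (a + 1)) * real n))"
      unfolding wt_pow by (simp add: algebra_simps)
    finally show ?thesis unfolding pow_geo by simp
  qed
  have "summable (\<lambda>n. ((1 - 2 powr a) * 2 powr (a * real_of_int M) * P1\<^sup>2) * (2 powr a) ^ n
      + (B * P1 * (1 - 2 powr a) * 2 powr ((a + 1) * real_of_int (M - 1))) * (2 powr (- (a + 1))) ^ n)"
    using s unfolding a_def
    by (intro summable_add summable_mult summable_geometric) (auto simp: powr_less_one)
  then show ?thesis unfolding a_def[symmetric] e1 e2 .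
qed


lemma Enorm:
  shows "integrable (lborel \<Otimes>\<^sub>M lborel) (\<lambda>q. indicator (Eq m) q * norm (complex_of_real ((cmod (\<phi> (fst q) - \<phi> (snd q)))\<^sup>2)))"
    and "integral\<^sup>L (lborel \<Otimes>\<^sub>M lborel) (\<lambda>q. indicator (Eq m) q * norm (complex_of_real ((cmod (\<phi> (fst q) - \<phi> (snd q)))\<^sup>2)))
         \<le> 2 * 2 powr real_of_int m * NN - 2 * T m"
proof -
  have pw: "(\<lambda>q. complex_of_real (indicator (Eq m) q * norm (complex_of_real ((cmod (\<phi> (fst q) - \<phi> (snd q)))\<^sup>2))))
      = (\<lambda>q. indicator (Eq m) q * complex_of_real ((cmod (\<phi> (fst q) - \<phi> (snd q)))\<^sup>2))"
    by (auto simp: indicator_def norm_power)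
  show "integrable (lborel \<Otimes>\<^sub>M lborel) (\<lambda>q. indicator (Eq m) q * norm (complex_of_real ((cmod (\<phi> (fst q) - \<phi> (snd q)))\<^sup>2)))"
    using Ulev(1)[of m] unfolding pw[symmetric] complex_of_real_integrable_eq .
  have "complex_of_real (integral\<^sup>L (lborel \<Otimes>\<^sub>M lborel) (\<lambda>q. indicator (Eq m) q * norm (complex_of_real ((cmod (\<phi> (fst q) - \<phi> (snd q)))\<^sup>2))))
      = integral\<^sup>L (lborel \<Otimes>\<^sub>M lborel) (\<lambda>q. complex_of_real (indicator (Eq m) q * norm (complex_of_real ((cmod (\<phi> (fst q) - \<phi> (snd q)))\<^sup>2))))"
    by (rule integral_complex_of_real[symmetric])
  also have "\<dots> = of_real (2 * 2 powr real_of_int m * NN - 2 * T m)" unfolding pw by (rule Ulev(2))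
  finally show "integral\<^sup>L (lborel \<Otimes>\<^sub>M lborel) (\<lambda>q. indicator (Eq m) q * norm (complex_of_real ((cmod (\<phi> (fst q) - \<phi> (snd q)))\<^sup>2)))
         \<le> 2 * 2 powr real_of_int m * NN - 2 * T m" by (simp only: of_real_eq_iff)
qed

lemma sf_main:
  assumes s: "0 < s" "s < 1/2"
  shows "complex_of_real (dgamma s * L2_norm_pos \<phi> ^ 4) \<le> form_Q s \<phi> * complex_of_real (energy_E s \<phi>)"
proof -
  define u where "u m = T m / 2 powr real_of_int m" for m
  have Tu: "T m = 2 powr real_of_int m * u m" for m unfolding u_def by simp
  have ufine: "m \<le> m1 \<Longrightarrow> u m = NN" for m unfolding u_def using T_fine by simp
  have ularge: "M \<le> m \<Longrightarrow> u m = 0" for m unfolding u_def using T_large by simp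
  have uanti: "u m \<le> u (m - 1)" for m
  proof -
    have e: "2 powr real_of_int m = 2 * 2 powr real_of_int (m - 1)" by (simp add: powr_diff)
    show ?thesis unfolding u_def e using T_mono[of m] by (simp add: divide_right_mono field_simps)
  qed
  note MA = main_alg[OF s ufine ularge uanti m1M Tu]
  have p1: "2 * s - 1 < 0" using s by simp
  have p2: "- (2 * s + 1) < 0" using s by simp
  note KQ = kernel_integral[OF G_meas p1 Tlev(1) Tlev(2) Qnorm(1) Qnorm(2) WQ_summable[OF s]]
  note KE = kernel_integral[OF GE_meas p2 Ulev(1) Ulev(2) Enorm(1) Enorm(2), where c = "m1 + 1"]
  have FQ: "form_Q s \<phi> = integral\<^sup>L (lborel \<Otimes>\<^sub>M lborel) (\<lambda>q. indicator posquad q * (if fst q = snd q then 0 else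
              complex_of_real (dyadic_dist (fst q) (snd q) powr (2 * s - 1)) * (\<phi> (fst q) * cnj (\<phi> (snd q)))))"
    unfolding form_Q_def set_lebesgue_integral_def
  proof (rule Bochner_Integration.integral_cong[OF refl])
    fix q :: "real \<times> real"
    show "indicator posquad q *\<^sub>R (complex_of_real (dyadic_dist (fst q) (snd q) powr (2 * s)) * \<phi> (fst q) * cnj (\<phi> (snd q))
        / complex_of_real (dyadic_dist (fst q) (snd q))) = indicator posquad q * (if fst q = snd q then 0 else
              complex_of_real (dyadic_dist (fst q) (snd q) powr (2 * s - 1)) * (\<phi> (fst q) * cnj (\<phi> (snd q))))"
    proof (cases "q \<in> posquad")
      case False then show ?thesis by simp
    next
      case True
      then have q: "0 < fst q" "0 < snd q" unfolding posquad_def by (auto simp: mem_Times_iff)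
      show ?thesis
      proof (cases "fst q = snd q")
        case True then show ?thesis using dist_diag[OF q(1)] by simp
      next
        case False
        have d: "0 < dyadic_dist (fst q) (snd q)" using dist_pos[OF q False] .
        have "dyadic_dist (fst q) (snd q) powr (2 * s - 1) = dyadic_dist (fst q) (snd q) powr (2 * s) / dyadic_dist (fst q) (snd q)"
          using d by (simp add: powr_diff)
        then show ?thesis using True False by (simp add: scaleR_conv_of_real)
      qed
    qed
  qed
  have FE: "complex_of_real (energy_E s \<phi>) = integral\<^sup>L (lborel \<Otimes>\<^sub>M lborel) (\<lambda>q. indicator posquad q * (if fst q = snd q then 0 else
              complex_of_real (dyadic_dist (fst q) (snd q) powr (- (2 * s + 1))) * complex_of_real ((cmod (\<phi> (fst q) - \<phi> (snd q)))\<^sup>2)))"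
    unfolding energy_E_def set_lebesgue_integral_def integral_complex_of_real[symmetric]
  proof (rule Bochner_Integration.integral_cong[OF refl])
    fix q :: "real \<times> real"
    show "complex_of_real (indicator posquad q *\<^sub>R ((cmod (\<phi> (fst q) - \<phi> (snd q)))\<^sup>2 / dyadic_dist (fst q) (snd q) powr (2 * s)
          / dyadic_dist (fst q) (snd q))) = indicator posquad q * (if fst q = snd q then 0 else
              complex_of_real (dyadic_dist (fst q) (snd q) powr (- (2 * s + 1))) * complex_of_real ((cmod (\<phi> (fst q) - \<phi> (snd q)))\<^sup>2))"
    proof (cases "q \<in> posquad")
      case False then show ?thesis by simp
    next
      case True
      then have q: "0 < fst q" "0 < snd q" unfolding posquad_def by (auto simp: mem_Times_iff)
      show ?thesis
      proof (cases "fst q = snd q")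
        case True then show ?thesis by simp
      next
        case False
        have d: "0 < dyadic_dist (fst q) (snd q)" using dist_pos[OF q False] .
        have "dyadic_dist (fst q) (snd q) powr (- (2 * s + 1)) = 1 / (dyadic_dist (fst q) (snd q) powr (2 * s) * dyadic_dist (fst q) (snd q))"
        proof -
          have "dyadic_dist (fst q) (snd q) powr (- (2 * s + 1)) = 1 / dyadic_dist (fst q) (snd q) powr (2 * s + 1)"
            by (rule powr_minus_divide)
          moreover have "dyadic_dist (fst q) (snd q) powr (2 * s + 1) = dyadic_dist (fst q) (snd q) powr (2 * s) * dyadic_dist (fst q) (snd q)"
            using d by (simp add: powr_add)
          ultimately show ?thesis by simp
        qed
        then show ?thesis using True False by (simp add: divide_inverse)
      qed
    qed
  qed
  have L2: "L2_norm_pos \<phi> ^ 4 = NN\<^sup>2"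
  proof -
    have "L2_norm_pos \<phi> = sqrt NN" unfolding L2_norm_pos_def set_lebesgue_integral_def NN_def by simp
    moreover have "(sqrt NN) ^ 4 = ((sqrt NN)^2)^2" by (simp flip: power_mult)
    ultimately show ?thesis using NN_nonneg by simp
  qed
  have "form_Q s \<phi> * complex_of_real (energy_E s \<phi>) = of_real (suminf (\<lambda>n. wt (2 * s - 1) (M + int n) * T (M + int n) + wt (2 * s - 1) (M - int n - 1) * T (M - int n - 1))) * of_real (suminf (\<lambda>n. wt (- (2 * s + 1)) (m1 + 1 + int n) * (2 * 2 powr real_of_int (m1 + 1 + int n) * NN - 2 * T (m1 + 1 + int n))
        + wt (- (2 * s + 1)) (m1 + 1 - int n - 1) * (2 * 2 powr real_of_int (m1 + 1 - int n - 1) * NN - 2 * T (m1 + 1 - int n - 1))))"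
  proof -
    have IQ: "integral\<^sup>L (lborel \<Otimes>\<^sub>M lborel) (\<lambda>q. indicator posquad q * (if fst q = snd q then 0 else
              complex_of_real (dyadic_dist (fst q) (snd q) powr (2 * s - 1)) * (\<phi> (fst q) * cnj (\<phi> (snd q)))))
        = of_real (suminf (\<lambda>n. wt (2 * s - 1) (M + int n) * T (M + int n) + wt (2 * s - 1) (M - int n - 1) * T (M - int n - 1)))"
      using KQ(3) by simp
    have IE: "integral\<^sup>L (lborel \<Otimes>\<^sub>M lborel) (\<lambda>q. indicator posquad q * (if fst q = snd q then 0 else
              complex_of_real (dyadic_dist (fst q) (snd q) powr (- (2 * s + 1))) * complex_of_real ((cmod (\<phi> (fst q) - \<phi> (snd q)))\<^sup>2)))
        = of_real (suminf (\<lambda>n. wt (- (2 * s + 1)) (m1 + 1 + int n) * (2 * 2 powr real_of_int (m1 + 1 + int n) * NN - 2 * T (m1 + 1 + int n))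
        + wt (- (2 * s + 1)) (m1 + 1 - int n - 1) * (2 * 2 powr real_of_int (m1 + 1 - int n - 1) * NN - 2 * T (m1 + 1 - int n - 1))))"
      using KE(3)[OF MA(2)] by simp
    show ?thesis unfolding FQ FE IQ IE ..
  qed
  then show ?thesis unfolding L2 using MA(3) by (simp add: less_eq_complex_def)
qed

end

lemma haar_mother_ceil: "haar_mother t = (if \<lceil>2 * t\<rceil> = 1 then 1 else if \<lceil>2 * t\<rceil> = 2 then -1 else 0)"
  unfolding haar_mother_def indicator_def by (auto simp: ceiling_eq_iff)

lemma haar_cell: "haar j k x = 2 powr (real_of_int j / 2) *
   (if cell (- j - 1) x - 2 * int k = 1 then 1 else if cell (- j - 1) x - 2 * int k = 2 then -1 else 0)"
proof -
  have e: "x / 2 powr real_of_int (- j - 1) = 2 * (2 powr real_of_int j * x)"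
    by (simp add: powr_minus_divide powr_add[symmetric] powr_diff field_simps)
  have "\<lceil>2 * (2 powr real_of_int j * x - real k)\<rceil> = cell (- j - 1) x - 2 * int k"
  proof -
    have "2 * (2 powr real_of_int j * x - real k) = x / 2 powr real_of_int (- j - 1) - of_int (2 * int k)"
      unfolding e by simp
    then show ?thesis unfolding cell_def by (simp only: ceiling_diff_of_int)
  qed
  then show ?thesis unfolding haar_def haar_mother_ceil by simp
qed

lemma haar_eqv: "eqv (- j - 1) x y \<Longrightarrow> haar j k x = haar j k y"
  unfolding haar_cell eqv_def by simp

lemma haar_bound: "\<bar>haar j k x\<bar> \<le> 2 powr (real_of_int j / 2)"
  unfolding haar_def haar_mother_def by (auto simp: indicator_def)

lemma haar_zero_right: assumes "(real k + 1) * 2 powr (- real_of_int j) < x" shows "haar j k x = 0"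
proof -
  have "(real k + 1) < 2 powr real_of_int j * x"
    using assms by (simp add: powr_minus_divide field_simps)
  then show ?thesis unfolding haar_def haar_mother_def by (auto simp: indicator_def)
qed

lemma haar_zero_left: assumes "x \<le> 0" shows "haar j k x = 0"
proof -
  have "2 powr real_of_int j * x \<le> 0" using assms by (simp add: mult_nonneg_nonpos)
  then show ?thesis unfolding haar_def haar_mother_def by (auto simp: indicator_def)
qed

lemma haar_meas[measurable]: "haar j k \<in> borel_measurable lborel"
  unfolding haar_def haar_mother_def by measurable

lemma haar_split: "haar j k x = 2 powr (real_of_int j / 2) *
   (indicator {real k * 2 powr (- real_of_int j) <.. (real k + 1/2) * 2 powr (- real_of_int j)} x
  - indicator {(real k + 1/2) * 2 powr (- real_of_int j) <.. (real k + 1) * 2 powr (- real_of_int j)} x)"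
proof -
  define t where "t = 2 powr real_of_int j"
  have t: "0 < t" unfolding t_def by simp
  have tm: "2 powr (- real_of_int j) = 1 / t" unfolding t_def by (simp add: powr_minus_divide)
  have i1: "indicator {0<..1/2} (t * x - real k) = (indicator {real k * (1/t) <.. (real k + 1/2) * (1/t)} x :: real)"
    using t by (auto simp: indicator_def field_simps)
  have i2: "indicator {1/2<..1} (t * x - real k) = (indicator {(real k + 1/2) * (1/t) <.. (real k + 1) * (1/t)} x :: real)"
    using t by (auto simp: indicator_def field_simps)
  show ?thesis unfolding haar_def haar_mother_def tm t_def[symmetric] i1 i2 ..
qed

lemma haar_integrable: "integrable lborel (haar j k)"
  unfolding haar_split[abs_def]
  by (intro integrable_mult_right Bochner_Integration.integrable_diff integrable_real_indicator) auto

lemma haar_integral: "integral\<^sup>L lborel (haar j k) = 0"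
proof -
  have "integral\<^sup>L lborel (haar j k) = 2 powr (real_of_int j / 2) *
     (measure lborel {real k * 2 powr (- real_of_int j) <.. (real k + 1/2) * 2 powr (- real_of_int j)}
    - measure lborel {(real k + 1/2) * 2 powr (- real_of_int j) <.. (real k + 1) * 2 powr (- real_of_int j)})"
    unfolding haar_split[abs_def]
    by (subst integral_mult_right_zero, subst Bochner_Integration.integral_diff) (auto intro!: integrable_real_indicator)
  also have "\<dots> = 0" by (simp add: measure_def algebra_simps)
  finally show ?thesis .
qed

lemma haar_support_bound:
  assumes "real_of_int (int k + \<bar>j\<bar>) \<le> real_of_int Mx"
  shows "(real k + 1) * 2 powr (- real_of_int j) \<le> 2 powr real_of_int Mx"
proof -
  have "real k + 1 \<le> 2 powr real k"
  proof -
    have "k + 1 \<le> 2 ^ k" using Suc_leI[OF less_exp[of k]] by simp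
    then have "real (k + 1) \<le> real (2 ^ k)" by (rule of_nat_mono)
    then show ?thesis by (simp add: powr_realpow)
  qed
  moreover have "2 powr (- real_of_int j) \<le> 2 powr real_of_int \<bar>j\<bar>" by (intro powr_mono) auto
  ultimately have "(real k + 1) * 2 powr (- real_of_int j) \<le> 2 powr real k * 2 powr real_of_int \<bar>j\<bar>"
    by (intro mult_mono) auto
  also have "\<dots> = 2 powr real_of_int (int k + \<bar>j\<bar>)" by (simp add: powr_add)
  also have "\<dots> \<le> 2 powr real_of_int Mx" using assms by (intro powr_mono) auto
  finally show ?thesis .
qed

theorem theorem2p5:
  fixes s :: real and \<phi> :: "real \<Rightarrow> complex"
  assumes "0 < s" and "s < 1/2"
    and "\<phi> \<in> haar_span"
  shows "complex_of_real (dgamma s * L2_norm_pos \<phi> ^ 4)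
           \<le> form_Q s \<phi> * complex_of_real (energy_E s \<phi>)"
proof -
  from assms(3) obtain F c where F: "finite (F :: (int \<times> nat) set)"
    and \<phi>def: "\<phi> = (\<lambda>x. \<Sum>(j,k)\<in>F. c (j,k) * complex_of_real (haar j k x))"
    unfolding haar_span_def by blast
  define M where "M = (\<Sum>p\<in>F. int (snd p) + \<bar>fst p\<bar>) + 1"
  define m1 where "m1 = - (\<Sum>p\<in>F. \<bar>fst p\<bar>) - 1"
  define B where "B = (\<Sum>p\<in>F. cmod (c p) * 2 powr (real_of_int (fst p) / 2))"
  define R where "R = 2 powr real_of_int M"
  have \<phi>': "\<phi> = (\<lambda>x. \<Sum>p\<in>F. c p * complex_of_real (haar (fst p) (snd p) x))"
    unfolding \<phi>def by (simp add: case_prod_beta)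
  have pM: "(real (snd p) + 1) * 2 powr (- real_of_int (fst p)) \<le> R" if "p \<in> F" for p
  proof -
    have "int (snd p) + \<bar>fst p\<bar> \<le> (\<Sum>p\<in>F. int (snd p) + \<bar>fst p\<bar>)"
      using that F by (intro member_le_sum) auto
    then have "real_of_int (int (snd p) + \<bar>fst p\<bar>) \<le> real_of_int M" unfolding M_def by linarith
    then show ?thesis unfolding R_def by (rule haar_support_bound)
  qed
  have pm1: "m1 \<le> - fst p - 1" if "p \<in> F" for p
  proof -
    have "\<bar>fst p\<bar> \<le> (\<Sum>p\<in>F. \<bar>fst p\<bar>)" using that F by (intro member_le_sum) auto
    then show ?thesis unfolding m1_def by linarith
  qed
  have "sf \<phi> B R M m1"
  proof
    show "\<phi> \<in> borel_measurable lborel" unfolding \<phi>' by measurable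
  next
    fix x
    have "cmod (\<phi> x) \<le> (\<Sum>p\<in>F. cmod (c p * complex_of_real (haar (fst p) (snd p) x)))"
      unfolding \<phi>' by (rule norm_sum)
    also have "\<dots> \<le> B" unfolding B_def
      by (intro sum_mono) (auto simp: norm_mult intro!: mult_left_mono haar_bound)
    finally show "cmod (\<phi> x) \<le> B" .
  next
    show "R = 2 powr real_of_int M" by (rule R_def)
  next
    fix x assume x: "R < x"
    have "haar (fst p) (snd p) x = 0" if "p \<in> F" for p
      using pM[OF that] x by (intro haar_zero_right) linarith
    then show "\<phi> x = 0" unfolding \<phi>' by simp
  next
    fix m assume m: "M \<le> m"
    have RM: "R \<le> 2 powr real_of_int m" unfolding R_def using m by (intro powr_mono) auto
    have pw: "(\<lambda>x. indicator (C m 0) x * \<phi> x) = \<phi>"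
    proof
      fix x
      show "indicator (C m 0) x * \<phi> x = \<phi> x"
      proof (cases "x \<in> C m 0")
        case False
        then have "x \<le> 0 \<or> 2 powr real_of_int m < x" unfolding C_def by auto
        have "haar (fst p) (snd p) x = 0" if "p \<in> F" for p
        proof (cases "x \<le> 0")
          case True then show ?thesis by (rule haar_zero_left)
        next
          case False
          then have "2 powr real_of_int m < x" using \<open>x \<le> 0 \<or> 2 powr real_of_int m < x\<close> by simp
          then show ?thesis using pM[OF that] RM by (intro haar_zero_right) linarith
        qed
        then show ?thesis using False unfolding \<phi>' by simp
      qed simp
    qed
    show "integral\<^sup>L lborel (\<lambda>x. indicator (C m 0) x * \<phi> x) = 0"
    proof -
      have "integral\<^sup>L lborel (\<lambda>x. \<Sum>p\<in>F. c p * complex_of_real (haar (fst p) (snd p) x))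
          = (\<Sum>p\<in>F. integral\<^sup>L lborel (\<lambda>x. c p * complex_of_real (haar (fst p) (snd p) x)))"
        by (rule Bochner_Integration.integral_sum) (intro integrable_mult_right integrable_of_real haar_integrable)
      also have "\<dots> = 0" by (simp add: haar_integral)
      finally show ?thesis unfolding pw unfolding \<phi>' .
    qed
  next
    fix x y assume xy: "0 < x" "0 < y" "eqv m1 x y"
    have "haar (fst p) (snd p) x = haar (fst p) (snd p) y" if "p \<in> F" for p
      using eqv_mono[OF xy(3) pm1[OF that]] by (rule haar_eqv)
    then show "\<phi> x = \<phi> y" unfolding \<phi>' by simp
  next
    have "0 \<le> (\<Sum>p\<in>F. \<bar>fst p\<bar>)" "0 \<le> (\<Sum>p\<in>F. int (snd p) + \<bar>fst p\<bar>)"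
      by (auto intro: sum_nonneg)
    then show "m1 < M" unfolding m1_def M_def by linarith
  qed
  then show ?thesis using sf.sf_main assms(1,2) by blast
qed

end
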